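(* Let $G$ be a finite abelian $p$-group generated by $d$ elements, acting on a finite abelian $p$-group $M$. Assume there is a subgroup $H_0\subset G$ such that $G/H_0$ is cyclic and $H_0$ acts trivially on $M$ (i.e. $M^{H_0}=M$). Then $$|\mathrm{H}^1(G,M)|\leq |M^G|^{d}\quad\text{and}\quad |\mathrm{H}^2(G,M)|\leq |M^G|^{d^2}.$$ *)

theory Defs
  imports "HOL-Algebra.Algebra"
begin

definition module_action :: "('g,'a) monoid_scheme \<Rightarrow> ('m,'b) monoid_scheme \<Rightarrow> ('g \<Rightarrow> 'm \<Rightarrow> 'm) \<Rightarrow> bool" where
  "module_action G M act \<longleftrightarrow> group G \<and> comm_group M \<and>
     (\<forall>g\<in>carrier G. act g \<in> hom M M) \<and>
     (\<forall>m\<in>carrier M. act \<one>\<^bsub>G\<^esub> m = m) \<and>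
     (\<forall>g\<in>carrier G. \<forall>h\<in>carrier G. \<forall>m\<in>carrier M. act (g \<otimes>\<^bsub>G\<^esub> h) m = act g (act h m))"

definition p_group :: "nat \<Rightarrow> ('g,'a) monoid_scheme \<Rightarrow> bool" where
  "p_group p G \<longleftrightarrow> Factorial_Ring.prime p \<and> finite (carrier G) \<and> (\<exists>k. order G = p ^ k)"

definition invariants :: "('g,'a) monoid_scheme \<Rightarrow> ('m,'b) monoid_scheme \<Rightarrow> ('g \<Rightarrow> 'm \<Rightarrow> 'm) \<Rightarrow> 'm set" where
  "invariants G M act = {m \<in> carrier M. \<forall>g\<in>carrier G. act g m = m}"

definition cocycles1 where
  "cocycles1 G M act = {f \<in> carrier G \<rightarrow>\<^sub>E carrier M.
     \<forall>g\<in>carrier G. \<forall>h\<in>carrier G. f (g \<otimes>\<^bsub>G\<^esub> h) = f g \<otimes>\<^bsub>M\<^esub> act g (f h)}"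

definition coboundaries1 where
  "coboundaries1 G M act = {f \<in> carrier G \<rightarrow>\<^sub>E carrier M.
     \<exists>m\<in>carrier M. \<forall>g\<in>carrier G. f g = act g m \<otimes>\<^bsub>M\<^esub> inv\<^bsub>M\<^esub> m}"

definition H1 where
  "H1 G M act = (\<lambda>f. {f' \<in> cocycles1 G M act. \<exists>b\<in>coboundaries1 G M act.
                          \<forall>g\<in>carrier G. f' g = f g \<otimes>\<^bsub>M\<^esub> b g}) ` cocycles1 G M act"

definition cocycles2 where
  "cocycles2 G M act = {f \<in> carrier G \<rightarrow>\<^sub>E (carrier G \<rightarrow>\<^sub>E carrier M).
     \<forall>g\<in>carrier G. \<forall>h\<in>carrier G. \<forall>k\<in>carrier G.
       act g (f h k) \<otimes>\<^bsub>M\<^esub> f g (h \<otimes>\<^bsub>G\<^esub> k) = f (g \<otimes>\<^bsub>G\<^esub> h) k \<otimes>\<^bsub>M\<^esub> f g h}"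

definition coboundaries2 where
  "coboundaries2 G M act = {f \<in> carrier G \<rightarrow>\<^sub>E (carrier G \<rightarrow>\<^sub>E carrier M).
     \<exists>\<phi>\<in>carrier G \<rightarrow>\<^sub>E carrier M. \<forall>g\<in>carrier G. \<forall>h\<in>carrier G.
       f g h = act g (\<phi> h) \<otimes>\<^bsub>M\<^esub> inv\<^bsub>M\<^esub> (\<phi> (g \<otimes>\<^bsub>G\<^esub> h)) \<otimes>\<^bsub>M\<^esub> \<phi> g}"

definition H2 where
  "H2 G M act = (\<lambda>f. {f' \<in> cocycles2 G M act. \<exists>b\<in>coboundaries2 G M act.
                          \<forall>g\<in>carrier G. \<forall>h\<in>carrier G. f' g h = f g h \<otimes>\<^bsub>M\<^esub> b g h}) ` cocycles2 G M act"

end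

theory Submission
  imports Defs
begin


lemma card_fibers_le:
  assumes "finite S" "\<phi> ` S \<subseteq> T" "finite T"
    "\<And>s. s \<in> S \<Longrightarrow> card {s'\<in>S. \<phi> s' = \<phi> s} \<le> k"
  shows "card S \<le> card T * k"
proof -
  have eq: "S = (\<Union>t\<in>\<phi>`S. {s'\<in>S. \<phi> s' = t})" by auto
  have "card S = (\<Sum>t\<in>\<phi>`S. card {s'\<in>S. \<phi> s' = t})"
    by (subst eq, rule card_UN_disjoint) (use assms(1) in auto)
  also have "\<dots> \<le> (\<Sum>t\<in>\<phi>`S. k)"
    by (rule sum_mono) (use assms(4) in auto)
  also have "\<dots> = card (\<phi>`S) * k" by simp
  also have "\<dots> \<le> card T * k"
    by (simp add: assms card_mono)
  finally show ?thesis .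
qed

lemma card_fibers_eq:
  assumes "finite S"
    "\<And>s. s \<in> S \<Longrightarrow> card {s'\<in>S. \<phi> s' = \<phi> s} = k"
  shows "card S = card (\<phi> ` S) * k"
proof -
  have eq: "S = (\<Union>t\<in>\<phi>`S. {s'\<in>S. \<phi> s' = t})" by auto
  have "card S = (\<Sum>t\<in>\<phi>`S. card {s'\<in>S. \<phi> s' = t})"
    by (subst eq, rule card_UN_disjoint) (use assms(1) in auto)
  also have "\<dots> = (\<Sum>t\<in>\<phi>`S. k)"
    by (rule sum.cong) (use assms(2) in auto)
  also have "\<dots> = card (\<phi>`S) * k" by simp
  finally show ?thesis .
qed

lemma act_props:
  assumes "module_action K M act" "g \<in> carrier K"
  shows "\<And>m. m \<in> carrier M \<Longrightarrow> act g m \<in> carrier M"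
    and "\<And>m n. m \<in> carrier M \<Longrightarrow> n \<in> carrier M \<Longrightarrow> act g (m \<otimes>\<^bsub>M\<^esub> n) = act g m \<otimes>\<^bsub>M\<^esub> act g n"
    and "\<And>m. m \<in> carrier M \<Longrightarrow> act g (inv\<^bsub>M\<^esub> m) = inv\<^bsub>M\<^esub> (act g m)"
    and "act g \<one>\<^bsub>M\<^esub> = \<one>\<^bsub>M\<^esub>"
proof -
  have h: "act g \<in> hom M M" and M: "comm_group M" using assms unfolding module_action_def by auto
  then interpret group_hom M M "act g" by (simp add: comm_group.axioms(2) group_hom.intro group_hom_axioms.intro)
  show "\<And>m. m \<in> carrier M \<Longrightarrow> act g m \<in> carrier M" by simp
  show "\<And>m n. m \<in> carrier M \<Longrightarrow> n \<in> carrier M \<Longrightarrow> act g (m \<otimes>\<^bsub>M\<^esub> n) = act g m \<otimes>\<^bsub>M\<^esub> act g n" by simp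
  show "\<And>m. m \<in> carrier M \<Longrightarrow> act g (inv\<^bsub>M\<^esub> m) = inv\<^bsub>M\<^esub> (act g m)" by simp
  show "act g \<one>\<^bsub>M\<^esub> = \<one>\<^bsub>M\<^esub>" by simp
qed


definition FunG :: "('m,'b) monoid_scheme \<Rightarrow> 'g set \<Rightarrow> ('g \<Rightarrow> 'm) monoid" where
  "FunG M S = \<lparr>carrier = S \<rightarrow>\<^sub>E carrier M, monoid.mult = (\<lambda>f g. \<lambda>x\<in>S. f x \<otimes>\<^bsub>M\<^esub> g x),
      one = (\<lambda>x\<in>S. \<one>\<^bsub>M\<^esub>)\<rparr>"

lemma FunG_simps [simp]:
  "carrier (FunG M S) = S \<rightarrow>\<^sub>E carrier M"
  "f \<otimes>\<^bsub>FunG M S\<^esub> g = (\<lambda>x\<in>S. f x \<otimes>\<^bsub>M\<^esub> g x)"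
  "\<one>\<^bsub>FunG M S\<^esub> = (\<lambda>x\<in>S. \<one>\<^bsub>M\<^esub>)"
  by (simp_all add: FunG_def)

lemma comm_group_FunG:
  assumes "comm_group M" shows "comm_group (FunG M S)"
proof -
  interpret M: comm_group M by fact
  show ?thesis
  proof (rule comm_groupI, goal_cases)
    case (1 x y) then show ?case by (auto simp: PiE_iff)
  next
    case 2 then show ?case by auto
  next
    case (3 x y z) then show ?case by (auto simp: PiE_iff M.m_assoc)
  next
    case (4 x y) then show ?case by (auto simp: PiE_iff M.m_comm)
  next
    case (5 x) then show ?case by (force simp: PiE_iff extensional_def)
  next
    case (6 x)
    show ?case
      by (rule bexI[where x="\<lambda>s\<in>S. inv\<^bsub>M\<^esub> x s"]) (use 6 in \<open>auto simp: PiE_iff\<close>)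
  qed
qed

lemma FunG_inv:
  assumes "comm_group M" "f \<in> S \<rightarrow>\<^sub>E carrier M"
  shows "inv\<^bsub>FunG M S\<^esub> f = (\<lambda>x\<in>S. inv\<^bsub>M\<^esub> f x)"
proof -
  interpret M: comm_group M by fact
  interpret F: comm_group "FunG M S" by (rule comm_group_FunG) fact
  show ?thesis
    by (rule F.inv_equality) (use assms(2) in \<open>auto simp: PiE_iff\<close>)
qed

lemma (in group_hom) card_dom:
  assumes "finite (carrier G)"
  shows "card (carrier G) = card (h ` carrier G) * card (kernel G H h)"
proof (rule card_fibers_eq[OF assms])
  fix s assume s: "s \<in> carrier G"
  have "{s' \<in> carrier G. h s' = h s} = (\<lambda>k. s \<otimes>\<^bsub>G\<^esub> k) ` kernel G H h"
  proof (intro equalityI subsetI)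
    fix s' assume "s' \<in> {s' \<in> carrier G. h s' = h s}"
    then have s': "s' \<in> carrier G" "h s' = h s" by auto
    have "inv\<^bsub>G\<^esub> s \<otimes>\<^bsub>G\<^esub> s' \<in> kernel G H h"
      using s s' by (auto simp: kernel_def)
    moreover have "s' = s \<otimes>\<^bsub>G\<^esub> (inv\<^bsub>G\<^esub> s \<otimes>\<^bsub>G\<^esub> s')"
      using s s' by (simp add: G.m_assoc[symmetric])
    ultimately show "s' \<in> (\<lambda>k. s \<otimes>\<^bsub>G\<^esub> k) ` kernel G H h" by blast
  next
    fix s' assume "s' \<in> (\<lambda>k. s \<otimes>\<^bsub>G\<^esub> k) ` kernel G H h"
    then obtain k where "k \<in> kernel G H h" "s' = s \<otimes>\<^bsub>G\<^esub> k" by auto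
    then show "s' \<in> {s' \<in> carrier G. h s' = h s}" using s by (auto simp: kernel_def)
  qed
  also have "card \<dots> = card (kernel G H h)"
    by (rule card_image) (use s in \<open>auto simp: inj_on_def kernel_def\<close>)
  finally show "card {s' \<in> carrier G. h s' = h s} = card (kernel G H h)" .
qed


lemma (in comm_group) class_count:
  assumes Z: "subgroup Z G" and B: "subgroup B G" and BZ: "B \<subseteq> Z" and fin: "finite (carrier G)"
  shows "card ((\<lambda>f. {f'\<in>Z. \<exists>b\<in>B. f' = f \<otimes> b}) ` Z) * card B = card Z"
proof -
  let ?c = "\<lambda>f. {f'\<in>Z. \<exists>b\<in>B. f' = f \<otimes> b}"
  have finZ: "finite Z" using Z fin by (meson finite_subset subgroup.subset)
  have Zc: "x \<in> carrier G" if "x \<in> Z" for x by (rule subgroup.mem_carrier[OF Z that])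
  have Bc: "x \<in> carrier G" if "x \<in> B" for x by (rule subgroup.mem_carrier[OF B that])
  have "card Z = card (?c ` Z) * card B"
  proof (rule card_fibers_eq[OF finZ])
    fix f assume f: "f \<in> Z"
    have "{f'\<in>Z. ?c f' = ?c f} = ?c f"
    proof (intro equalityI subsetI)
      fix f' assume "f' \<in> {f'\<in>Z. ?c f' = ?c f}"
      then have f': "f' \<in> Z" "?c f' = ?c f" by auto
      have "f' \<in> ?c f'" using f' Zc[OF f'(1)] subgroup.one_closed[OF B] by force
      then show "f' \<in> ?c f" using f' by simp
    next
      fix f' assume "f' \<in> ?c f"
      then obtain b where b: "f' \<in> Z" "b \<in> B" "f' = f \<otimes> b" by auto
      have "?c f' = ?c f"
      proof (intro equalityI subsetI)
        fix x assume "x \<in> ?c f'"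
        then obtain b' where x: "x \<in> Z" "b' \<in> B" "x = f' \<otimes> b'" by auto
        have "x = f \<otimes> (b \<otimes> b')" using x b Zc[OF f] Bc[OF b(2)] Bc[OF x(2)] by (simp add: m_assoc)
        moreover have "b \<otimes> b' \<in> B" using subgroup.m_closed[OF B b(2) x(2)] .
        ultimately show "x \<in> ?c f" using x(1) by blast
      next
        fix x assume "x \<in> ?c f"
        then obtain b' where "x \<in> Z" "b' \<in> B" "x = f \<otimes> b'" by auto
        moreover have "f = f' \<otimes> inv b" unfolding b(3) using Zc[OF f] Bc[OF b(2)] by (simp add: m_assoc)
        ultimately have "x = f' \<otimes> (inv b \<otimes> b')" using Zc[OF b(1)] Bc[OF b(2)] Bc[OF \<open>b' \<in> B\<close>] by (simp add: m_assoc)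
        moreover have "inv b \<otimes> b' \<in> B" using subgroup.m_closed[OF B subgroup.m_inv_closed[OF B b(2)] \<open>b' \<in> B\<close>] .
        ultimately show "x \<in> ?c f'" using \<open>x \<in> Z\<close> by blast
      qed
      then show "f' \<in> {f'\<in>Z. ?c f' = ?c f}" using b by auto
    qed
    also have "?c f = (\<lambda>b. f \<otimes> b) ` B"
      using f BZ subgroup.m_closed[OF Z] by auto
    also have "card \<dots> = card B"
      by (rule card_image) (use f Zc Bc in \<open>auto simp: inj_on_def\<close>)
    finally show "card {f'\<in>Z. ?c f' = ?c f} = card B" .
  qed
  then show ?thesis by simp
qed


locale gmod =
  fixes K :: "('g,'a) monoid_scheme" and M :: "('m,'b) monoid_scheme" and act :: "'g \<Rightarrow> 'm \<Rightarrow> 'm"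
  assumes ma: "module_action K M act"
begin

sublocale K: group K using ma by (simp add: module_action_def)
sublocale M: comm_group M using ma by (simp add: module_action_def)

lemma act_closed [simp]: "g \<in> carrier K \<Longrightarrow> m \<in> carrier M \<Longrightarrow> act g m \<in> carrier M"
  using act_props(1)[OF ma] by blast
lemma act_mult [simp]: "g \<in> carrier K \<Longrightarrow> m \<in> carrier M \<Longrightarrow> n \<in> carrier M \<Longrightarrow> act g (m \<otimes>\<^bsub>M\<^esub> n) = act g m \<otimes>\<^bsub>M\<^esub> act g n"
  using act_props(2)[OF ma] by blast
lemma act_inv [simp]: "g \<in> carrier K \<Longrightarrow> m \<in> carrier M \<Longrightarrow> act g (inv\<^bsub>M\<^esub> m) = inv\<^bsub>M\<^esub> (act g m)"
  using act_props(3)[OF ma] by blast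
lemma act_one [simp]: "g \<in> carrier K \<Longrightarrow> act g \<one>\<^bsub>M\<^esub> = \<one>\<^bsub>M\<^esub>"
  using act_props(4)[OF ma] by blast
lemma act_id [simp]: "m \<in> carrier M \<Longrightarrow> act \<one>\<^bsub>K\<^esub> m = m"
  using ma by (simp add: module_action_def)
lemma act_comp: "g \<in> carrier K \<Longrightarrow> h \<in> carrier K \<Longrightarrow> m \<in> carrier M \<Longrightarrow> act (g \<otimes>\<^bsub>K\<^esub> h) m = act g (act h m)"
  using ma by (simp add: module_action_def)

lemma M_cancel [simp]:
  "x \<in> carrier M \<Longrightarrow> y \<in> carrier M \<Longrightarrow> x \<otimes>\<^bsub>M\<^esub> (inv\<^bsub>M\<^esub> x \<otimes>\<^bsub>M\<^esub> y) = y"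
  "x \<in> carrier M \<Longrightarrow> y \<in> carrier M \<Longrightarrow> inv\<^bsub>M\<^esub> x \<otimes>\<^bsub>M\<^esub> (x \<otimes>\<^bsub>M\<^esub> y) = y"
  by (simp_all add: M.m_assoc[symmetric])

lemma M_cancel2 [simp]:
  "x \<in> carrier M \<Longrightarrow> y \<in> carrier M \<Longrightarrow> z \<in> carrier M \<Longrightarrow> x \<otimes>\<^bsub>M\<^esub> (y \<otimes>\<^bsub>M\<^esub> (inv\<^bsub>M\<^esub> x \<otimes>\<^bsub>M\<^esub> z)) = y \<otimes>\<^bsub>M\<^esub> z"
  "x \<in> carrier M \<Longrightarrow> y \<in> carrier M \<Longrightarrow> z \<in> carrier M \<Longrightarrow> inv\<^bsub>M\<^esub> x \<otimes>\<^bsub>M\<^esub> (y \<otimes>\<^bsub>M\<^esub> (x \<otimes>\<^bsub>M\<^esub> z)) = y \<otimes>\<^bsub>M\<^esub> z"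
  "x \<in> carrier M \<Longrightarrow> y \<in> carrier M \<Longrightarrow> x \<otimes>\<^bsub>M\<^esub> (y \<otimes>\<^bsub>M\<^esub> inv\<^bsub>M\<^esub> x) = y"
  "x \<in> carrier M \<Longrightarrow> y \<in> carrier M \<Longrightarrow> inv\<^bsub>M\<^esub> x \<otimes>\<^bsub>M\<^esub> (y \<otimes>\<^bsub>M\<^esub> x) = y"
  "x \<in> carrier M \<Longrightarrow> y \<in> carrier M \<Longrightarrow> z \<in> carrier M \<Longrightarrow> w \<in> carrier M \<Longrightarrow> x \<otimes>\<^bsub>M\<^esub> (y \<otimes>\<^bsub>M\<^esub> (z \<otimes>\<^bsub>M\<^esub> (inv\<^bsub>M\<^esub> x \<otimes>\<^bsub>M\<^esub> w))) = y \<otimes>\<^bsub>M\<^esub> (z \<otimes>\<^bsub>M\<^esub> w)"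
  "x \<in> carrier M \<Longrightarrow> y \<in> carrier M \<Longrightarrow> z \<in> carrier M \<Longrightarrow> w \<in> carrier M \<Longrightarrow> inv\<^bsub>M\<^esub> x \<otimes>\<^bsub>M\<^esub> (y \<otimes>\<^bsub>M\<^esub> (z \<otimes>\<^bsub>M\<^esub> (x \<otimes>\<^bsub>M\<^esub> w))) = y \<otimes>\<^bsub>M\<^esub> (z \<otimes>\<^bsub>M\<^esub> w)"
  "x \<in> carrier M \<Longrightarrow> y \<in> carrier M \<Longrightarrow> z \<in> carrier M \<Longrightarrow> x \<otimes>\<^bsub>M\<^esub> (y \<otimes>\<^bsub>M\<^esub> (z \<otimes>\<^bsub>M\<^esub> inv\<^bsub>M\<^esub> x)) = y \<otimes>\<^bsub>M\<^esub> z"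
  "x \<in> carrier M \<Longrightarrow> y \<in> carrier M \<Longrightarrow> z \<in> carrier M \<Longrightarrow> inv\<^bsub>M\<^esub> x \<otimes>\<^bsub>M\<^esub> (y \<otimes>\<^bsub>M\<^esub> (z \<otimes>\<^bsub>M\<^esub> x)) = y \<otimes>\<^bsub>M\<^esub> z"
     apply (subst M.m_lcomm; simp)
    apply (subst M.m_lcomm; simp)
   apply (subst M.m_comm[of y]; simp add: M.m_assoc[symmetric])
  apply (subst M.m_comm[of y]; simp add: M.m_assoc[symmetric])
     apply (subst M.m_lcomm; simp; subst M.m_lcomm; simp)
    apply (subst M.m_lcomm; simp; subst M.m_lcomm; simp)
   apply (subst M.m_lcomm; simp; subst M.m_comm[of z]; simp add: M.m_assoc[symmetric])
  apply (subst M.m_lcomm; simp; subst M.m_comm[of z]; simp add: M.m_assoc[symmetric])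
  done

abbreviation "F1 \<equiv> FunG M (carrier K)"
abbreviation "F2 \<equiv> FunG F1 (carrier K)"

sublocale F1: comm_group F1 by (rule comm_group_FunG) (rule M.comm_group_axioms)
sublocale F2: comm_group F2 by (rule comm_group_FunG) (rule F1.comm_group_axioms)

lemma F1_inv: "f \<in> carrier K \<rightarrow>\<^sub>E carrier M \<Longrightarrow> inv\<^bsub>F1\<^esub> f = (\<lambda>x\<in>carrier K. inv\<^bsub>M\<^esub> f x)"
  by (rule FunG_inv) (rule M.comm_group_axioms)

lemma F2_inv: "f \<in> carrier K \<rightarrow>\<^sub>E carrier F1 \<Longrightarrow> inv\<^bsub>F2\<^esub> f = (\<lambda>x\<in>carrier K. \<lambda>y\<in>carrier K. inv\<^bsub>M\<^esub> f x y)"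
  by (subst FunG_inv[OF F1.comm_group_axioms], assumption) (auto simp: F1_inv PiE_iff intro!: restrict_ext)

lemma Z1_sub: "subgroup (cocycles1 K M act) F1"
proof (rule F1.subgroupI)
  show "cocycles1 K M act \<subseteq> carrier F1" by (auto simp: cocycles1_def)
  have "(\<lambda>x\<in>carrier K. \<one>\<^bsub>M\<^esub>) \<in> cocycles1 K M act" by (auto simp: cocycles1_def)
  then show "cocycles1 K M act \<noteq> {}" by blast
next
  fix a assume a: "a \<in> cocycles1 K M act"
  then have ac: "\<And>x. x \<in> carrier K \<Longrightarrow> a x \<in> carrier M" by (auto simp: cocycles1_def)
  show "inv\<^bsub>F1\<^esub> a \<in> cocycles1 K M act"
    using a ac by (auto simp: cocycles1_def F1_inv M.inv_mult)
next
  fix a b assume a: "a \<in> cocycles1 K M act" and b: "b \<in> cocycles1 K M act"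
  then have ac: "\<And>x. x \<in> carrier K \<Longrightarrow> a x \<in> carrier M" "\<And>x. x \<in> carrier K \<Longrightarrow> b x \<in> carrier M"
    by (auto simp: cocycles1_def)
  show "a \<otimes>\<^bsub>F1\<^esub> b \<in> cocycles1 K M act"
    using a b ac by (auto simp: cocycles1_def M.m_ac)
qed

definition "bet m = (\<lambda>g\<in>carrier K. act g m \<otimes>\<^bsub>M\<^esub> inv\<^bsub>M\<^esub> m)"

lemma bet_hom: "group_hom M F1 bet"
proof -
  have "bet \<in> hom M F1"
    by (rule homI) (auto simp: bet_def M.m_ac M.inv_mult intro!: restrict_ext)
  then show ?thesis
    by (intro group_hom.intro group_hom_axioms.intro) (auto intro: M.is_group F1.is_group)
qed

lemma B1_img: "coboundaries1 K M act = bet ` carrier M"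
proof (intro equalityI subsetI)
  fix f assume "f \<in> coboundaries1 K M act"
  then obtain m where f: "f \<in> carrier K \<rightarrow>\<^sub>E carrier M" "m \<in> carrier M" "\<forall>g\<in>carrier K. f g = act g m \<otimes>\<^bsub>M\<^esub> inv\<^bsub>M\<^esub> m"
    by (auto simp: coboundaries1_def)
  then have "f = bet m" by (auto simp: bet_def PiE_iff extensional_def intro!: ext)
  then show "f \<in> bet ` carrier M" using f by blast
next
  fix f assume "f \<in> bet ` carrier M"
  then show "f \<in> coboundaries1 K M act" by (auto simp: coboundaries1_def bet_def)
qed

lemma B1_ker: "kernel M F1 bet = invariants K M act"
proof -
  have "act g m \<otimes>\<^bsub>M\<^esub> inv\<^bsub>M\<^esub> m = \<one>\<^bsub>M\<^esub> \<longleftrightarrow> act g m = m" if "g \<in> carrier K" "m \<in> carrier M" for g m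
    using that by (metis M.inv_closed M.inv_equality M.inv_inv M.l_inv act_closed M.r_inv)
  then show ?thesis
    by (auto simp: kernel_def invariants_def bet_def restrict_def fun_eq_iff split: if_splits)
qed

lemma B1_sub: "subgroup (coboundaries1 K M act) F1"
  unfolding B1_img by (rule group_hom.img_is_subgroup[OF bet_hom])

lemma B1_Z1: "coboundaries1 K M act \<subseteq> cocycles1 K M act"
  unfolding B1_img by (auto simp: bet_def cocycles1_def act_comp M.m_ac M.inv_mult)

lemma card_B1:
  assumes "finite (carrier M)"
  shows "card (coboundaries1 K M act) * card (invariants K M act) = card (carrier M)"
  using group_hom.card_dom[OF bet_hom assms] by (simp add: B1_img B1_ker)

lemma H1_eq: "H1 K M act = (\<lambda>f. {f'\<in>cocycles1 K M act. \<exists>b\<in>coboundaries1 K M act. f' = f \<otimes>\<^bsub>F1\<^esub> b}) ` cocycles1 K M act"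
  unfolding H1_def
proof (rule image_cong[OF refl], rule Collect_cong, rule conj_cong[OF refl], rule bex_cong[OF refl])
  fix f f' b assume f: "f \<in> cocycles1 K M act" and f': "f' \<in> cocycles1 K M act" and b: "b \<in> coboundaries1 K M act"
  then have "f' \<in> extensional (carrier K)" by (auto simp: cocycles1_def PiE_def)
  then show "(\<forall>g\<in>carrier K. f' g = f g \<otimes>\<^bsub>M\<^esub> b g) = (f' = f \<otimes>\<^bsub>F1\<^esub> b)"
    by (auto simp: extensional_def fun_eq_iff)
qed

lemma card_H1:
  assumes "finite (carrier K)" "finite (carrier M)"
  shows "card (H1 K M act) * card (coboundaries1 K M act) = card (cocycles1 K M act)"
proof -
  have "finite (carrier F1)" using assms by (simp add: finite_PiE)
  then show ?thesis unfolding H1_eq by (rule F1.class_count[OF Z1_sub B1_sub B1_Z1])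
qed

definition "del \<phi> = (\<lambda>g\<in>carrier K. \<lambda>h\<in>carrier K. act g (\<phi> h) \<otimes>\<^bsub>M\<^esub> inv\<^bsub>M\<^esub> (\<phi> (g \<otimes>\<^bsub>K\<^esub> h)) \<otimes>\<^bsub>M\<^esub> \<phi> g)"

lemma del_hom: "group_hom F1 F2 del"
proof -
  have "del \<in> hom F1 F2"
  proof (rule homI)
    fix x assume "x \<in> carrier F1" then show "del x \<in> carrier F2" by (auto simp: del_def PiE_iff)
  next
    fix x y assume "x \<in> carrier F1" "y \<in> carrier F1"
    then show "del (x \<otimes>\<^bsub>F1\<^esub> y) = del x \<otimes>\<^bsub>F2\<^esub> del y"
      by (auto simp: del_def PiE_iff M.m_ac M.inv_mult intro!: restrict_ext)
  qed
  then show ?thesis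
    by (intro group_hom.intro group_hom_axioms.intro) (auto intro: F1.is_group F2.is_group)
qed

lemma B2_img: "coboundaries2 K M act = del ` carrier F1"
proof (intro equalityI subsetI)
  fix f assume "f \<in> coboundaries2 K M act"
  then obtain \<phi> where f: "f \<in> carrier K \<rightarrow>\<^sub>E (carrier K \<rightarrow>\<^sub>E carrier M)" "\<phi> \<in> carrier K \<rightarrow>\<^sub>E carrier M"
     "\<forall>g\<in>carrier K. \<forall>h\<in>carrier K. f g h = act g (\<phi> h) \<otimes>\<^bsub>M\<^esub> inv\<^bsub>M\<^esub> (\<phi> (g \<otimes>\<^bsub>K\<^esub> h)) \<otimes>\<^bsub>M\<^esub> \<phi> g"
    by (auto simp: coboundaries2_def)
  then have "f = del \<phi>" by (auto simp: del_def PiE_iff extensional_def intro!: ext)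
  then show "f \<in> del ` carrier F1" using f by auto
next
  fix f assume "f \<in> del ` carrier F1"
  then show "f \<in> coboundaries2 K M act" by (auto simp: coboundaries2_def del_def PiE_iff)
qed

lemma B2_ker: "kernel F1 F2 del = cocycles1 K M act"
proof -
  have "act g (\<phi> h) \<otimes>\<^bsub>M\<^esub> inv\<^bsub>M\<^esub> (\<phi> (g \<otimes>\<^bsub>K\<^esub> h)) \<otimes>\<^bsub>M\<^esub> \<phi> g = \<one>\<^bsub>M\<^esub> \<longleftrightarrow> \<phi> (g \<otimes>\<^bsub>K\<^esub> h) = \<phi> g \<otimes>\<^bsub>M\<^esub> act g (\<phi> h)"
    if "g \<in> carrier K" "h \<in> carrier K" "\<phi> \<in> carrier K \<rightarrow>\<^sub>E carrier M" for g h \<phi>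
  proof -
    have c: "act g (\<phi> h) \<in> carrier M" "\<phi> (g \<otimes>\<^bsub>K\<^esub> h) \<in> carrier M" "\<phi> g \<in> carrier M" using that by (auto simp: PiE_iff)
    have "act g (\<phi> h) \<otimes>\<^bsub>M\<^esub> inv\<^bsub>M\<^esub> (\<phi> (g \<otimes>\<^bsub>K\<^esub> h)) \<otimes>\<^bsub>M\<^esub> \<phi> g = (\<phi> g \<otimes>\<^bsub>M\<^esub> act g (\<phi> h)) \<otimes>\<^bsub>M\<^esub> inv\<^bsub>M\<^esub> (\<phi> (g \<otimes>\<^bsub>K\<^esub> h))"
      using c by (simp add: M.m_ac)
    then show ?thesis using c
      by (metis M.inv_closed M.inv_equality M.inv_inv M.m_closed M.r_inv)
  qed
  then show ?thesis
    apply (auto simp: kernel_def cocycles1_def del_def fun_eq_iff restrict_def PiE_iff split: if_splits)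
    by (metis (no_types, lifting))+
qed

lemma Z2_sub: "subgroup (cocycles2 K M act) F2"
proof (rule F2.subgroupI)
  show "cocycles2 K M act \<subseteq> carrier F2" by (auto simp: cocycles2_def)
  have "(\<lambda>x\<in>carrier K. \<lambda>y\<in>carrier K. \<one>\<^bsub>M\<^esub>) \<in> cocycles2 K M act" by (auto simp: cocycles2_def)
  then show "cocycles2 K M act \<noteq> {}" by blast
next
  fix a assume a: "a \<in> cocycles2 K M act"
  then have ac: "\<And>x y. x \<in> carrier K \<Longrightarrow> y \<in> carrier K \<Longrightarrow> a x y \<in> carrier M" by (auto simp: cocycles2_def)
  have ac2: "a \<in> carrier K \<rightarrow>\<^sub>E carrier F1" using a by (auto simp: cocycles2_def)
  show "inv\<^bsub>F2\<^esub> a \<in> cocycles2 K M act"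
    using a ac by (auto simp: cocycles2_def F2_inv[OF ac2] M.inv_mult[symmetric])
next
  fix a b assume a: "a \<in> cocycles2 K M act" and b: "b \<in> cocycles2 K M act"
  then have ac: "\<And>x y. x \<in> carrier K \<Longrightarrow> y \<in> carrier K \<Longrightarrow> a x y \<in> carrier M" 
     "\<And>x y. x \<in> carrier K \<Longrightarrow> y \<in> carrier K \<Longrightarrow> b x y \<in> carrier M"
    by (auto simp: cocycles2_def)
  have e: "act g (a h k \<otimes>\<^bsub>M\<^esub> b h k) \<otimes>\<^bsub>M\<^esub> (a g (h \<otimes>\<^bsub>K\<^esub> k) \<otimes>\<^bsub>M\<^esub> b g (h \<otimes>\<^bsub>K\<^esub> k)) =
           (a (g \<otimes>\<^bsub>K\<^esub> h) k \<otimes>\<^bsub>M\<^esub> b (g \<otimes>\<^bsub>K\<^esub> h) k) \<otimes>\<^bsub>M\<^esub> (a g h \<otimes>\<^bsub>M\<^esub> b g h)"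
    if "g \<in> carrier K" "h \<in> carrier K" "k \<in> carrier K" for g h k
  proof -
    have "act g (a h k \<otimes>\<^bsub>M\<^esub> b h k) \<otimes>\<^bsub>M\<^esub> (a g (h \<otimes>\<^bsub>K\<^esub> k) \<otimes>\<^bsub>M\<^esub> b g (h \<otimes>\<^bsub>K\<^esub> k)) =
       (act g (a h k) \<otimes>\<^bsub>M\<^esub> a g (h \<otimes>\<^bsub>K\<^esub> k)) \<otimes>\<^bsub>M\<^esub> (act g (b h k) \<otimes>\<^bsub>M\<^esub> b g (h \<otimes>\<^bsub>K\<^esub> k))"
      using that ac by (simp add: M.m_ac)
    also have "\<dots> = (a (g \<otimes>\<^bsub>K\<^esub> h) k \<otimes>\<^bsub>M\<^esub> a g h) \<otimes>\<^bsub>M\<^esub> (b (g \<otimes>\<^bsub>K\<^esub> h) k \<otimes>\<^bsub>M\<^esub> b g h)"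
      using a b that by (simp add: cocycles2_def)
    also have "\<dots> = (a (g \<otimes>\<^bsub>K\<^esub> h) k \<otimes>\<^bsub>M\<^esub> b (g \<otimes>\<^bsub>K\<^esub> h) k) \<otimes>\<^bsub>M\<^esub> (a g h \<otimes>\<^bsub>M\<^esub> b g h)"
      using that ac by (simp add: M.m_ac)
    finally show ?thesis .
  qed
  show "a \<otimes>\<^bsub>F2\<^esub> b \<in> cocycles2 K M act"
    using a b ac e by (auto simp: cocycles2_def PiE_iff)
qed

lemma B2_sub: "subgroup (coboundaries2 K M act) F2"
  unfolding B2_img by (rule group_hom.img_is_subgroup[OF del_hom])

lemma B2_Z2: "coboundaries2 K M act \<subseteq> cocycles2 K M act"
proof
  fix f assume "f \<in> coboundaries2 K M act"
  then obtain \<phi> where f: "f = del \<phi>" "\<phi> \<in> carrier K \<rightarrow>\<^sub>E carrier M" unfolding B2_img by auto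
  have "act g (del \<phi> h k) \<otimes>\<^bsub>M\<^esub> del \<phi> g (h \<otimes>\<^bsub>K\<^esub> k) = del \<phi> (g \<otimes>\<^bsub>K\<^esub> h) k \<otimes>\<^bsub>M\<^esub> del \<phi> g h"
    if "g \<in> carrier K" "h \<in> carrier K" "k \<in> carrier K" for g h k
    using that f(2) by (auto simp: del_def PiE_iff act_comp M.m_ac M.inv_mult K.m_assoc)
  then show "f \<in> cocycles2 K M act" using f del_hom group_hom.hom_closed
    by (auto simp: cocycles2_def del_def PiE_iff)
qed

lemma card_B2:
  assumes "finite (carrier K)" "finite (carrier M)"
  shows "card (coboundaries2 K M act) * card (cocycles1 K M act) = card (carrier M) ^ card (carrier K)"
proof -
  have "finite (carrier F1)" using assms by (simp add: finite_PiE)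
  from group_hom.card_dom[OF del_hom this]
  show ?thesis by (simp add: B2_img B2_ker card_PiE[OF assms(1)])
qed

lemma H2_eq: "H2 K M act = (\<lambda>f. {f'\<in>cocycles2 K M act. \<exists>b\<in>coboundaries2 K M act. f' = f \<otimes>\<^bsub>F2\<^esub> b}) ` cocycles2 K M act"
  unfolding H2_def
proof (rule image_cong[OF refl], rule Collect_cong, rule conj_cong[OF refl], rule bex_cong[OF refl])
  fix f f' b assume f: "f \<in> cocycles2 K M act" and f': "f' \<in> cocycles2 K M act" and b: "b \<in> coboundaries2 K M act"
  then have "f' \<in> carrier K \<rightarrow>\<^sub>E (carrier K \<rightarrow>\<^sub>E carrier M)" by (auto simp: cocycles2_def)
  then show "(\<forall>g\<in>carrier K. \<forall>h\<in>carrier K. f' g h = f g h \<otimes>\<^bsub>M\<^esub> b g h) = (f' = f \<otimes>\<^bsub>F2\<^esub> b)"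
    by (auto simp: PiE_iff extensional_def fun_eq_iff) 
qed

lemma card_H2:
  assumes "finite (carrier K)" "finite (carrier M)"
  shows "card (H2 K M act) * card (coboundaries2 K M act) = card (cocycles2 K M act)"
proof -
  have "finite (carrier F2)" using assms by (simp add: finite_PiE)
  then show ?thesis unfolding H2_eq by (rule F2.class_count[OF Z2_sub B2_sub B2_Z2])
qed

end


lemma ma_sub:
  assumes "module_action K M act" "subgroup A K"
  shows "module_action (K\<lparr>carrier := A\<rparr>) M act"
proof -
  have g: "group K" using assms(1) by (simp add: module_action_def)
  have s: "A \<subseteq> carrier K" using subgroup.subset[OF assms(2)] .
  show ?thesis using assms subgroup.subgroup_is_group[OF assms(2) g]
    unfolding module_action_def by (auto simp: subsetD[OF s])
qed

locale step = gmod K M act for K :: "('g,'a) monoid_scheme" and M :: "('m,'b) monoid_scheme" and act +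
  fixes A :: "'g set" and h :: 'g
  assumes commK: "\<And>x y. x \<in> carrier K \<Longrightarrow> y \<in> carrier K \<Longrightarrow> x \<otimes>\<^bsub>K\<^esub> y = y \<otimes>\<^bsub>K\<^esub> x"
    and subA: "subgroup A K" and hK: "h \<in> carrier K"
    and gen: "\<And>g. g \<in> carrier K \<Longrightarrow> \<exists>a\<in>A. \<exists>j::nat. g = a \<otimes>\<^bsub>K\<^esub> h [^]\<^bsub>K\<^esub> j"
    and finK: "finite (carrier K)" and finM: "finite (carrier M)"
begin

abbreviation "KA \<equiv> K\<lparr>carrier := A\<rparr>"

lemma M_div_one: "x \<in> carrier M \<Longrightarrow> y \<in> carrier M \<Longrightarrow> (x \<otimes>\<^bsub>M\<^esub> inv\<^bsub>M\<^esub> y = \<one>\<^bsub>M\<^esub>) = (x = y)"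
  by (metis M.inv_closed M.inv_equality M.inv_inv M.m_comm M.r_inv)

lemma A_sub: "a \<in> A \<Longrightarrow> a \<in> carrier K" by (rule subgroup.mem_carrier[OF subA])

sublocale SA: gmod KA M act by (unfold_locales) (rule ma_sub[OF ma subA])

lemma Z1_val: "u \<in> cocycles1 K M act \<Longrightarrow> g \<in> carrier K \<Longrightarrow> u g \<in> carrier M"
  by (auto simp: cocycles1_def)

lemma Z1_eq: "u \<in> cocycles1 K M act \<Longrightarrow> g \<in> carrier K \<Longrightarrow> k \<in> carrier K \<Longrightarrow> u (g \<otimes>\<^bsub>K\<^esub> k) = u g \<otimes>\<^bsub>M\<^esub> act g (u k)"
  by (auto simp: cocycles1_def)

lemma Z1_vanish:
  assumes u: "u \<in> cocycles1 K M act" and uA: "\<forall>a\<in>A. u a = \<one>\<^bsub>M\<^esub>" and uh: "u h = \<one>\<^bsub>M\<^esub>"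
  shows "\<forall>g\<in>carrier K. u g = \<one>\<^bsub>M\<^esub>"
proof
  have pw: "u (h [^]\<^bsub>K\<^esub> j) = \<one>\<^bsub>M\<^esub>" for j :: nat
  proof (induction j)
    case 0 then show ?case using uA subgroup.one_closed[OF subA] by simp
  next
    case (Suc j) then show ?case using Z1_eq[OF u, of "h [^]\<^bsub>K\<^esub> j" h] hK uh by (simp add: K.nat_pow_Suc)
  qed
  fix g assume g: "g \<in> carrier K"
  then obtain a j where a: "a \<in> A" and gj: "g = a \<otimes>\<^bsub>K\<^esub> h [^]\<^bsub>K\<^esub> (j::nat)" using gen by blast
  show "u g = \<one>\<^bsub>M\<^esub>" using Z1_eq[OF u, of a "h [^]\<^bsub>K\<^esub> j"] a A_sub hK pw uA gj by simp
qed

lemma Z1_inv: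
  assumes u: "u \<in> cocycles1 K M act" and uA: "\<forall>a\<in>A. u a = \<one>\<^bsub>M\<^esub>"
  shows "u h \<in> invariants KA M act"
proof -
  have "act a (u h) = u h" if a: "a \<in> A" for a
  proof -
    have "u (a \<otimes>\<^bsub>K\<^esub> h) = act a (u h)" using Z1_eq[OF u, of a h] a A_sub hK uA Z1_val[OF u hK] by simp
    moreover have "u (h \<otimes>\<^bsub>K\<^esub> a) = u h" using Z1_eq[OF u, of h a] a A_sub hK uA Z1_val[OF u hK] by simp
    ultimately show ?thesis using commK[OF A_sub[OF a] hK] by simp
  qed
  then show ?thesis using Z1_val[OF u hK] by (simp add: invariants_def)
qed

definition "res1 f = (\<lambda>x\<in>A. f x)"

lemma res1_Z1: "f \<in> cocycles1 K M act \<Longrightarrow> res1 f \<in> cocycles1 KA M act"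
  by (auto simp: cocycles1_def res1_def PiE_iff A_sub subgroup.m_closed[OF subA])

lemma card_Z1_step:
  "card (cocycles1 K M act) \<le> card (cocycles1 KA M act) * card (invariants KA M act)"
proof (rule card_fibers_le[where \<phi>=res1])
  show "finite (cocycles1 K M act)"
    by (rule finite_subset[OF _ finite_PiE[OF finK, of "\<lambda>_. carrier M"]]) (use finM in \<open>auto simp: cocycles1_def\<close>)
  show "res1 ` cocycles1 K M act \<subseteq> cocycles1 KA M act" using res1_Z1 by auto
  have fA: "finite A" using finite_subset[OF subgroup.subset[OF subA] finK] .
  show "finite (cocycles1 KA M act)"
    by (rule finite_subset[OF _ finite_PiE[OF fA, of "\<lambda>_. carrier M"]]) (use finM in \<open>auto simp: cocycles1_def\<close>)
next
  fix f0 assume f0: "f0 \<in> cocycles1 K M act"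
  let ?F = "{f \<in> cocycles1 K M act. res1 f = res1 f0}"
  let ?m = "\<lambda>f. f h \<otimes>\<^bsub>M\<^esub> inv\<^bsub>M\<^esub> f0 h"
  have inj: "inj_on ?m ?F"
  proof (rule inj_onI)
    fix f f' assume f: "f \<in> ?F" and f': "f' \<in> ?F" and e: "?m f = ?m f'"
    have fc: "f \<in> cocycles1 K M act" "f' \<in> cocycles1 K M act" using f f' by auto
    have fh: "f h = f' h" using e Z1_val[OF fc(1) hK] Z1_val[OF fc(2) hK] Z1_val[OF f0 hK]
      by (metis M.inv_closed M.r_cancel M.m_comm)
    have fA: "f a = f' a" if "a \<in> A" for a
      using f f' that unfolding res1_def by (metis (mono_tags, lifting) mem_Collect_eq restrict_apply')
    let ?u = "f \<otimes>\<^bsub>F1\<^esub> inv\<^bsub>F1\<^esub> f'"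
    have u: "?u \<in> cocycles1 K M act"
      using fc by (meson subgroup.m_closed subgroup.m_inv_closed Z1_sub)
    have if': "inv\<^bsub>F1\<^esub> f' = (\<lambda>x\<in>carrier K. inv\<^bsub>M\<^esub> f' x)"
      by (rule F1_inv) (use fc in \<open>auto simp: cocycles1_def\<close>)
    have uval: "?u x = f x \<otimes>\<^bsub>M\<^esub> inv\<^bsub>M\<^esub> f' x" if "x \<in> carrier K" for x
      using that by (simp add: if')
    have van: "\<forall>g\<in>carrier K. ?u g = \<one>\<^bsub>M\<^esub>"
      by (rule Z1_vanish[OF u]) (use if' fA fh A_sub hK Z1_val[OF fc(2)] M_div_one in auto)
    have "\<forall>g\<in>carrier K. f g = f' g"
    proof
      fix g assume g: "g \<in> carrier K"
      have "f g \<otimes>\<^bsub>M\<^esub> inv\<^bsub>M\<^esub> f' g = \<one>\<^bsub>M\<^esub>" using van g by (simp add: if')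
      then show "f g = f' g" using M_div_one Z1_val[OF fc(1) g] Z1_val[OF fc(2) g] by simp
    qed
    then show "f = f'" using fc by (auto simp: cocycles1_def PiE_iff extensional_def fun_eq_iff)
  qed
  have sub: "?m ` ?F \<subseteq> invariants KA M act"
  proof
    fix x assume "x \<in> ?m ` ?F"
    then obtain f where f: "f \<in> ?F" and x: "x = ?m f" by auto
    have fc: "f \<in> cocycles1 K M act" using f by auto
    let ?u = "f \<otimes>\<^bsub>F1\<^esub> inv\<^bsub>F1\<^esub> f0"
    have u: "?u \<in> cocycles1 K M act"
      using fc f0 by (meson subgroup.m_closed subgroup.m_inv_closed Z1_sub)
    have if': "inv\<^bsub>F1\<^esub> f0 = (\<lambda>x\<in>carrier K. inv\<^bsub>M\<^esub> f0 x)"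
      by (rule F1_inv) (use f0 in \<open>auto simp: cocycles1_def\<close>)
    have uval: "?u x = f x \<otimes>\<^bsub>M\<^esub> inv\<^bsub>M\<^esub> f0 x" if "x \<in> carrier K" for x
      using that by (simp add: if')
    have fA: "f a = f0 a" if "a \<in> A" for a
      using f that unfolding res1_def by (metis (mono_tags, lifting) mem_Collect_eq restrict_apply')
    have "?u h \<in> invariants KA M act"
      by (rule Z1_inv[OF u]) (use if' fA A_sub Z1_val[OF f0] in auto)
    then show "x \<in> invariants KA M act" using x uval[OF hK] by simp
  qed
  have fi: "finite (invariants KA M act)" using finM by (auto simp: invariants_def)
  have "card ?F = card (?m ` ?F)" using card_image[OF inj] by simp
  also have "\<dots> \<le> card (invariants KA M act)" by (rule card_mono[OF fi sub])
  finally show "card ?F \<le> card (invariants KA M act)" .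
qed

end


context gmod begin
lemma frac:
  assumes c: "x \<in> carrier M" "y \<in> carrier M" "p \<in> carrier M" "q \<in> carrier M" "r \<in> carrier M" "t \<in> carrier M"
    and e: "x \<otimes>\<^bsub>M\<^esub> q \<otimes>\<^bsub>M\<^esub> t = y \<otimes>\<^bsub>M\<^esub> p \<otimes>\<^bsub>M\<^esub> r"
  shows "x \<otimes>\<^bsub>M\<^esub> inv\<^bsub>M\<^esub> y = p \<otimes>\<^bsub>M\<^esub> inv\<^bsub>M\<^esub> q \<otimes>\<^bsub>M\<^esub> (r \<otimes>\<^bsub>M\<^esub> inv\<^bsub>M\<^esub> t)"
proof -
  have "x \<otimes>\<^bsub>M\<^esub> inv\<^bsub>M\<^esub> y = (x \<otimes>\<^bsub>M\<^esub> q \<otimes>\<^bsub>M\<^esub> t) \<otimes>\<^bsub>M\<^esub> (inv\<^bsub>M\<^esub> y \<otimes>\<^bsub>M\<^esub> inv\<^bsub>M\<^esub> (q \<otimes>\<^bsub>M\<^esub> t))"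
    using c by (simp add: M.m_assoc M.inv_mult_group M_cancel)
  also have "\<dots> = (y \<otimes>\<^bsub>M\<^esub> p \<otimes>\<^bsub>M\<^esub> r) \<otimes>\<^bsub>M\<^esub> (inv\<^bsub>M\<^esub> y \<otimes>\<^bsub>M\<^esub> inv\<^bsub>M\<^esub> (q \<otimes>\<^bsub>M\<^esub> t))" using e by simp
  also have "\<dots> = (p \<otimes>\<^bsub>M\<^esub> r) \<otimes>\<^bsub>M\<^esub> inv\<^bsub>M\<^esub> (q \<otimes>\<^bsub>M\<^esub> t)"
    using c by (simp add: M.m_assoc M.m_lcomm[of y] M_cancel)
  also have "\<dots> = p \<otimes>\<^bsub>M\<^esub> inv\<^bsub>M\<^esub> q \<otimes>\<^bsub>M\<^esub> (r \<otimes>\<^bsub>M\<^esub> inv\<^bsub>M\<^esub> t)"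
    using c by (simp add: M.m_ac M.inv_mult)
  finally show ?thesis .
qed
end

context step begin

abbreviation hp :: "nat \<Rightarrow> 'g" where "hp k \<equiv> h [^]\<^bsub>K\<^esub> k"

lemma hp_closed [simp]: "hp k \<in> carrier K" using hK by simp
lemma hp_Suc: "hp (Suc k) = hp k \<otimes>\<^bsub>K\<^esub> h" by simp
lemma hp_Suc2: "hp (Suc k) = h \<otimes>\<^bsub>K\<^esub> hp k" using K.nat_pow_Suc2[OF hK] .

definition "nn = (LEAST k. 0 < k \<and> hp k \<in> A)"

lemma nn_props: "0 < nn" "hp nn \<in> A" "\<And>k. 0 < k \<Longrightarrow> k < nn \<Longrightarrow> hp k \<notin> A"
proof -
  have ex: "0 < K.ord h \<and> hp (K.ord h) \<in> A"
    using K.ord_ge_1[OF finK hK] K.pow_ord_eq_1[OF hK] subgroup.one_closed[OF subA] by simp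
  have P: "0 < nn \<and> hp nn \<in> A" unfolding nn_def by (rule LeastI[of _ "K.ord h"]) (rule ex)
  then show "0 < nn" "hp nn \<in> A" by auto
  show "\<And>k. 0 < k \<Longrightarrow> k < nn \<Longrightarrow> hp k \<notin> A"
    using not_less_Least unfolding nn_def by blast
qed

lemma Z2_val: "u \<in> cocycles2 K M act \<Longrightarrow> g \<in> carrier K \<Longrightarrow> k \<in> carrier K \<Longrightarrow> u g k \<in> carrier M"
  by (auto simp: cocycles2_def PiE_iff)

lemma coc: "u \<in> cocycles2 K M act \<Longrightarrow> g \<in> carrier K \<Longrightarrow> k \<in> carrier K \<Longrightarrow> l \<in> carrier K \<Longrightarrow>
   act g (u k l) \<otimes>\<^bsub>M\<^esub> u g (k \<otimes>\<^bsub>K\<^esub> l) = u (g \<otimes>\<^bsub>K\<^esub> k) l \<otimes>\<^bsub>M\<^esub> u g k"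
  by (auto simp: cocycles2_def)

definition "kerR = {u \<in> cocycles2 K M act. \<forall>a\<in>A. \<forall>b\<in>A. u a b = \<one>\<^bsub>M\<^esub>}"

lemma kerR_one:
  assumes u: "u \<in> kerR" and x: "x \<in> carrier K"
  shows "u \<one>\<^bsub>K\<^esub> x = \<one>\<^bsub>M\<^esub>" "u x \<one>\<^bsub>K\<^esub> = \<one>\<^bsub>M\<^esub>"
proof -
  have uz: "u \<in> cocycles2 K M act" and u11: "u \<one>\<^bsub>K\<^esub> \<one>\<^bsub>K\<^esub> = \<one>\<^bsub>M\<^esub>"
    using u subgroup.one_closed[OF subA] by (auto simp: kerR_def)
  have "act \<one>\<^bsub>K\<^esub> (u \<one>\<^bsub>K\<^esub> x) \<otimes>\<^bsub>M\<^esub> u \<one>\<^bsub>K\<^esub> (\<one>\<^bsub>K\<^esub> \<otimes>\<^bsub>K\<^esub> x) = u (\<one>\<^bsub>K\<^esub> \<otimes>\<^bsub>K\<^esub> \<one>\<^bsub>K\<^esub>) x \<otimes>\<^bsub>M\<^esub> u \<one>\<^bsub>K\<^esub> \<one>\<^bsub>K\<^esub>"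
    using coc[OF uz K.one_closed K.one_closed x] by simp
  then have "u \<one>\<^bsub>K\<^esub> x \<otimes>\<^bsub>M\<^esub> u \<one>\<^bsub>K\<^esub> x = u \<one>\<^bsub>K\<^esub> x \<otimes>\<^bsub>M\<^esub> \<one>\<^bsub>M\<^esub>"
    using x Z2_val[OF uz] u11 by simp
  then show "u \<one>\<^bsub>K\<^esub> x = \<one>\<^bsub>M\<^esub>" using x Z2_val[OF uz] by (simp del: M.r_one)
  have "act x (u \<one>\<^bsub>K\<^esub> \<one>\<^bsub>K\<^esub>) \<otimes>\<^bsub>M\<^esub> u x (\<one>\<^bsub>K\<^esub> \<otimes>\<^bsub>K\<^esub> \<one>\<^bsub>K\<^esub>) = u (x \<otimes>\<^bsub>K\<^esub> \<one>\<^bsub>K\<^esub>) \<one>\<^bsub>K\<^esub> \<otimes>\<^bsub>M\<^esub> u x \<one>\<^bsub>K\<^esub>"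
    using coc[OF uz x K.one_closed K.one_closed] by simp
  then have "u x \<one>\<^bsub>K\<^esub> \<otimes>\<^bsub>M\<^esub> \<one>\<^bsub>M\<^esub> = u x \<one>\<^bsub>K\<^esub> \<otimes>\<^bsub>M\<^esub> u x \<one>\<^bsub>K\<^esub>"
    using x Z2_val[OF uz] u11 by simp
  then show "u x \<one>\<^bsub>K\<^esub> = \<one>\<^bsub>M\<^esub>" using x Z2_val[OF uz] by (simp del: M.r_one)
qed

primrec Sq :: "('g \<Rightarrow> 'g \<Rightarrow> 'm) \<Rightarrow> nat \<Rightarrow> 'm" where
  "Sq u 0 = \<one>\<^bsub>M\<^esub>"
| "Sq u (Suc k) = Sq u k \<otimes>\<^bsub>M\<^esub> u (hp k) h"

lemma A_cancel: "a \<in> A \<Longrightarrow> x \<in> carrier K \<Longrightarrow> a \<otimes>\<^bsub>K\<^esub> x \<in> A \<Longrightarrow> x \<in> A"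
proof -
  assume a: "a \<in> A" and x: "x \<in> carrier K" and ax: "a \<otimes>\<^bsub>K\<^esub> x \<in> A"
  have "x = inv\<^bsub>K\<^esub> a \<otimes>\<^bsub>K\<^esub> (a \<otimes>\<^bsub>K\<^esub> x)" using a x A_sub by (simp add: K.m_assoc[symmetric])
  then show "x \<in> A" using subgroup.m_closed[OF subA subgroup.m_inv_closed[OF subA a] ax] by simp
qed

lemma kerR_vanish:
  assumes u: "u \<in> kerR" and hA: "h \<notin> A"
    and uD: "\<And>g. g \<in> carrier K \<Longrightarrow> g \<otimes>\<^bsub>K\<^esub> h \<notin> A \<Longrightarrow> g \<noteq> \<one>\<^bsub>K\<^esub> \<Longrightarrow> u g h = \<one>\<^bsub>M\<^esub>"
    and uc: "\<And>a. a \<in> A \<Longrightarrow> u h a = u a h"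
    and uS: "Sq u nn = \<one>\<^bsub>M\<^esub>"
  shows "\<And>g y. g \<in> carrier K \<Longrightarrow> y \<in> carrier K \<Longrightarrow> u g y = \<one>\<^bsub>M\<^esub>"
proof -
  have uz: "u \<in> cocycles2 K M act" and uA: "\<And>a b. a \<in> A \<Longrightarrow> b \<in> A \<Longrightarrow> u a b = \<one>\<^bsub>M\<^esub>"
    using u by (auto simp: kerR_def)
  note val = Z2_val[OF uz]
  have D': "u g h = \<one>\<^bsub>M\<^esub>" if "g \<in> carrier K" "g \<otimes>\<^bsub>K\<^esub> h \<notin> A" for g
    using uD[OF that] kerR_one[OF u hK] by blast
  have S1: "Sq u k = \<one>\<^bsub>M\<^esub>" if "k < nn" for k
    using that
  proof (induction k)
    case 0 then show ?case by simp
  next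
    case (Suc k)
    have "hp k \<otimes>\<^bsub>K\<^esub> h \<notin> A" using nn_props(3)[of "Suc k"] Suc.prems by simp
    then show ?case using Suc D'[of "hp k"] by simp
  qed
  obtain m where m: "nn = Suc m" using nn_props(1) gr0_implies_Suc by blast
  have hn1: "u (hp m) h = \<one>\<^bsub>M\<^esub>" using uS S1[of m] m val[OF hp_closed hK] by simp
  have S3: "u a (hp k) = \<one>\<^bsub>M\<^esub>" if "a \<in> A" "k < nn" for a k
    using that(2)
  proof (induction k)
    case 0 then show ?case using kerR_one[OF u A_sub[OF that(1)]] by simp
  next
    case (Suc k)
    have nA: "hp k \<otimes>\<^bsub>K\<^esub> h \<notin> A" using nn_props(3)[of "Suc k"] Suc.prems by simp
    have nA2: "(a \<otimes>\<^bsub>K\<^esub> hp k) \<otimes>\<^bsub>K\<^esub> h \<notin> A"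
    proof
      assume "(a \<otimes>\<^bsub>K\<^esub> hp k) \<otimes>\<^bsub>K\<^esub> h \<in> A"
      then have "a \<otimes>\<^bsub>K\<^esub> (hp k \<otimes>\<^bsub>K\<^esub> h) \<in> A" using A_sub[OF that(1)] hK by (simp add: K.m_assoc)
      then show False using A_cancel[OF that(1)] nA hK by simp
    qed
    have "act a (u (hp k) h) \<otimes>\<^bsub>M\<^esub> u a (hp k \<otimes>\<^bsub>K\<^esub> h) = u (a \<otimes>\<^bsub>K\<^esub> hp k) h \<otimes>\<^bsub>M\<^esub> u a (hp k)"
      using coc[OF uz A_sub[OF that(1)] hp_closed hK] .
    then show ?case
      using D'[OF hp_closed nA] D'[OF _ nA2] Suc A_sub[OF that(1)] hK val by simp
  qed
  have hall: "u g h = \<one>\<^bsub>M\<^esub>" if g: "g \<in> carrier K" for g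
  proof (cases "g \<otimes>\<^bsub>K\<^esub> h \<in> A")
    case False then show ?thesis using D'[OF g] by blast
  next
    case True
    define a where "a = (g \<otimes>\<^bsub>K\<^esub> h) \<otimes>\<^bsub>K\<^esub> inv\<^bsub>K\<^esub> (hp nn)"
    have a: "a \<in> A" unfolding a_def
      using subgroup.m_closed[OF subA True subgroup.m_inv_closed[OF subA nn_props(2)]] .
    have ga: "g = a \<otimes>\<^bsub>K\<^esub> hp m"
    proof -
      have "a \<otimes>\<^bsub>K\<^esub> hp m = (g \<otimes>\<^bsub>K\<^esub> h) \<otimes>\<^bsub>K\<^esub> (inv\<^bsub>K\<^esub> (hp m \<otimes>\<^bsub>K\<^esub> h) \<otimes>\<^bsub>K\<^esub> hp m)"
        unfolding a_def m using g hK by (simp add: K.m_assoc)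
      also have "\<dots> = (g \<otimes>\<^bsub>K\<^esub> h) \<otimes>\<^bsub>K\<^esub> inv\<^bsub>K\<^esub> h"
        using g hK by (simp add: K.inv_mult_group K.m_assoc)
      also have "\<dots> = g" using g hK by (simp add: K.m_assoc)
      finally show ?thesis by simp
    qed
    have "act a (u (hp m) h) \<otimes>\<^bsub>M\<^esub> u a (hp m \<otimes>\<^bsub>K\<^esub> h) = u (a \<otimes>\<^bsub>K\<^esub> hp m) h \<otimes>\<^bsub>M\<^esub> u a (hp m)"
      using coc[OF uz A_sub[OF a] hp_closed hK] .
    moreover have "u a (hp m \<otimes>\<^bsub>K\<^esub> h) = \<one>\<^bsub>M\<^esub>" using uA[OF a] nn_props(2) m by simp
    moreover have "u a (hp m) = \<one>\<^bsub>M\<^esub>" using S3[OF a] m by simp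
    ultimately show ?thesis using hn1 ga A_sub[OF a] hK val by simp
  qed
  have hA': "u h a = \<one>\<^bsub>M\<^esub>" if "a \<in> A" for a using uc[OF that] hall[OF A_sub[OF that]] by simp
  have Q: "u (a' \<otimes>\<^bsub>K\<^esub> hp j) a = \<one>\<^bsub>M\<^esub>" if a': "a' \<in> A" and a: "a \<in> A" for j a' a
    using a
  proof (induction j arbitrary: a)
    case 0 then show ?case using uA[OF a' 0] A_sub[OF a'] by simp
  next
    case (Suc j)
    define g where "g = a' \<otimes>\<^bsub>K\<^esub> hp j"
    have g: "g \<in> carrier K" unfolding g_def using A_sub[OF a'] by simp
    have ac: "a \<in> carrier K" using A_sub[OF Suc.prems] .
    have e1: "act g (u h a) \<otimes>\<^bsub>M\<^esub> u g (h \<otimes>\<^bsub>K\<^esub> a) = u (g \<otimes>\<^bsub>K\<^esub> h) a \<otimes>\<^bsub>M\<^esub> u g h"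
      using coc[OF uz g hK ac] .
    have e2: "act g (u a h) \<otimes>\<^bsub>M\<^esub> u g (a \<otimes>\<^bsub>K\<^esub> h) = u (g \<otimes>\<^bsub>K\<^esub> a) h \<otimes>\<^bsub>M\<^esub> u g a"
      using coc[OF uz g ac hK] .
    have "u g a = \<one>\<^bsub>M\<^esub>" using Suc.IH[OF Suc.prems] unfolding g_def .
    then have "u g (a \<otimes>\<^bsub>K\<^esub> h) = \<one>\<^bsub>M\<^esub>" using e2 hall hA'[OF Suc.prems] uc[OF Suc.prems] g ac hK val by simp
    then have "u (g \<otimes>\<^bsub>K\<^esub> h) a = \<one>\<^bsub>M\<^esub>" using e1 hall hA'[OF Suc.prems] commK[OF hK ac] g ac hK val by simp
    then show ?case unfolding g_def using A_sub[OF a'] hK by (simp add: K.m_assoc)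
  qed
  have Q': "u g a = \<one>\<^bsub>M\<^esub>" if "g \<in> carrier K" "a \<in> A" for g a
    using gen[OF that(1)] Q[OF _ that(2)] by blast
  have fin: "u g (a \<otimes>\<^bsub>K\<^esub> hp i) = \<one>\<^bsub>M\<^esub>" if g: "g \<in> carrier K" and a: "a \<in> A" for i g a
  proof (induction i)
    case 0 then show ?case using Q'[OF g a] A_sub[OF a] by simp
  next
    case (Suc i)
    have x: "a \<otimes>\<^bsub>K\<^esub> hp i \<in> carrier K" using A_sub[OF a] by simp
    have "act g (u (a \<otimes>\<^bsub>K\<^esub> hp i) h) \<otimes>\<^bsub>M\<^esub> u g ((a \<otimes>\<^bsub>K\<^esub> hp i) \<otimes>\<^bsub>K\<^esub> h) = u (g \<otimes>\<^bsub>K\<^esub> (a \<otimes>\<^bsub>K\<^esub> hp i)) h \<otimes>\<^bsub>M\<^esub> u g (a \<otimes>\<^bsub>K\<^esub> hp i)"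
      using coc[OF uz g x hK] .
    then have "u g ((a \<otimes>\<^bsub>K\<^esub> hp i) \<otimes>\<^bsub>K\<^esub> h) = \<one>\<^bsub>M\<^esub>" using hall Suc x g hK val by simp
    then show ?case using A_sub[OF a] hK by (simp add: K.m_assoc)
  qed
  fix g y assume "g \<in> carrier K" "y \<in> carrier K"
  then show "u g y = \<one>\<^bsub>M\<^esub>" using gen[of y] fin by blast
qed

definition "cfun u = (\<lambda>a\<in>A. u h a \<otimes>\<^bsub>M\<^esub> inv\<^bsub>M\<^esub> (u a h))"

lemma kerR_Z2: "u \<in> kerR \<Longrightarrow> u \<in> cocycles2 K M act" by (simp add: kerR_def)
lemma kerR_A: "u \<in> kerR \<Longrightarrow> a \<in> A \<Longrightarrow> b \<in> A \<Longrightarrow> u a b = \<one>\<^bsub>M\<^esub>" by (simp add: kerR_def)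

lemma cfun_Z1:
  assumes u: "u \<in> kerR"
  shows "cfun u \<in> cocycles1 KA M act"
proof -
  note uz = kerR_Z2[OF u] note val = Z2_val[OF uz]
  have "cfun u (a \<otimes>\<^bsub>K\<^esub> a') = cfun u a \<otimes>\<^bsub>M\<^esub> act a (cfun u a')" if a: "a \<in> A" and a': "a' \<in> A" for a a'
  proof -
    have ac: "a \<in> carrier K" "a' \<in> carrier K" using A_sub a a' by auto
    have aa: "a \<otimes>\<^bsub>K\<^esub> a' \<in> A" using subgroup.m_closed[OF subA a a'] .
    have ha: "h \<otimes>\<^bsub>K\<^esub> a = a \<otimes>\<^bsub>K\<^esub> h" "h \<otimes>\<^bsub>K\<^esub> a' = a' \<otimes>\<^bsub>K\<^esub> h" using commK hK ac by auto
    have E1: "u h (a \<otimes>\<^bsub>K\<^esub> a') = u (a \<otimes>\<^bsub>K\<^esub> h) a' \<otimes>\<^bsub>M\<^esub> u h a"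
      using coc[OF uz hK ac(1) ac(2)] kerR_A[OF u a a'] ha hK ac val by simp
    have E2: "act a (u h a') \<otimes>\<^bsub>M\<^esub> u a (a' \<otimes>\<^bsub>K\<^esub> h) = u (a \<otimes>\<^bsub>K\<^esub> h) a' \<otimes>\<^bsub>M\<^esub> u a h"
      using coc[OF uz ac(1) hK ac(2)] ha by simp
    have E3: "act a (u a' h) \<otimes>\<^bsub>M\<^esub> u a (a' \<otimes>\<^bsub>K\<^esub> h) = u (a \<otimes>\<^bsub>K\<^esub> a') h"
      using coc[OF uz ac(1) ac(2) hK] kerR_A[OF u a a'] hK ac val by simp
    have key: "u h (a \<otimes>\<^bsub>K\<^esub> a') \<otimes>\<^bsub>M\<^esub> u a h \<otimes>\<^bsub>M\<^esub> act a (u a' h) =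
               u (a \<otimes>\<^bsub>K\<^esub> a') h \<otimes>\<^bsub>M\<^esub> u h a \<otimes>\<^bsub>M\<^esub> act a (u h a')"
    proof -
      have "u h (a \<otimes>\<^bsub>K\<^esub> a') \<otimes>\<^bsub>M\<^esub> u a h \<otimes>\<^bsub>M\<^esub> act a (u a' h) =
            (u (a \<otimes>\<^bsub>K\<^esub> h) a' \<otimes>\<^bsub>M\<^esub> u a h) \<otimes>\<^bsub>M\<^esub> u h a \<otimes>\<^bsub>M\<^esub> act a (u a' h)"
        using E1 hK ac val by (simp add: M.m_ac)
      also have "\<dots> = (act a (u h a') \<otimes>\<^bsub>M\<^esub> u a (a' \<otimes>\<^bsub>K\<^esub> h)) \<otimes>\<^bsub>M\<^esub> u h a \<otimes>\<^bsub>M\<^esub> act a (u a' h)"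
        using E2 by simp
      also have "\<dots> = (act a (u a' h) \<otimes>\<^bsub>M\<^esub> u a (a' \<otimes>\<^bsub>K\<^esub> h)) \<otimes>\<^bsub>M\<^esub> u h a \<otimes>\<^bsub>M\<^esub> act a (u h a')"
        using hK ac val by (simp add: M.m_ac)
      also have "\<dots> = u (a \<otimes>\<^bsub>K\<^esub> a') h \<otimes>\<^bsub>M\<^esub> u h a \<otimes>\<^bsub>M\<^esub> act a (u h a')"
        using E3 by simp
      finally show ?thesis .
    qed
    have "u h (a \<otimes>\<^bsub>K\<^esub> a') \<otimes>\<^bsub>M\<^esub> inv\<^bsub>M\<^esub> (u (a \<otimes>\<^bsub>K\<^esub> a') h) =
        u h a \<otimes>\<^bsub>M\<^esub> inv\<^bsub>M\<^esub> (u a h) \<otimes>\<^bsub>M\<^esub> (act a (u h a') \<otimes>\<^bsub>M\<^esub> inv\<^bsub>M\<^esub> (act a (u a' h)))"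
      by (rule frac[OF _ _ _ _ _ _ key]) (use hK ac val in auto)
    then show ?thesis using a a' aa hK ac val by (simp add: cfun_def)
  qed
  then show ?thesis using val hK A_sub by (auto simp: cocycles1_def cfun_def PiE_iff)
qed

lemma Sq_val: "u \<in> cocycles2 K M act \<Longrightarrow> Sq u k \<in> carrier M"
  by (induction k) (auto simp: Z2_val hK)

lemma Sq_left:
  assumes u: "u \<in> kerR"
  shows "Sq u (Suc k) = act h (Sq u k) \<otimes>\<^bsub>M\<^esub> u h (hp k)"
proof (induction k)
  case 0 then show ?case using kerR_one[OF u hK] hK by simp
next
  case (Suc k)
  note uz = kerR_Z2[OF u] note val = Z2_val[OF uz]
  have e: "act h (u (hp k) h) \<otimes>\<^bsub>M\<^esub> u h (hp k \<otimes>\<^bsub>K\<^esub> h) = u (h \<otimes>\<^bsub>K\<^esub> hp k) h \<otimes>\<^bsub>M\<^esub> u h (hp k)"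
    using coc[OF uz hK hp_closed hK] .
  have c: "h \<otimes>\<^bsub>K\<^esub> hp k = hp k \<otimes>\<^bsub>K\<^esub> h" using commK[OF hK hp_closed] .
  have "Sq u (Suc (Suc k)) = act h (Sq u k) \<otimes>\<^bsub>M\<^esub> (u h (hp k) \<otimes>\<^bsub>M\<^esub> u (hp k \<otimes>\<^bsub>K\<^esub> h) h)"
    using Suc hK val Sq_val[OF uz] by (simp add: M.m_assoc)
  also have "\<dots> = act h (Sq u k) \<otimes>\<^bsub>M\<^esub> (act h (u (hp k) h) \<otimes>\<^bsub>M\<^esub> u h (hp k \<otimes>\<^bsub>K\<^esub> h))"
    using e c hK val by (simp add: M.m_comm)
  also have "\<dots> = act h (Sq u (Suc k)) \<otimes>\<^bsub>M\<^esub> u h (hp (Suc k))"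
    using hK val Sq_val[OF uz] by (simp add: M.m_assoc)
  finally show ?case .
qed

lemma Sq_A:
  assumes u: "u \<in> kerR" and uc: "\<And>a. a \<in> A \<Longrightarrow> u h a = u a h" and a: "a \<in> A"
  shows "act a (Sq u k) \<otimes>\<^bsub>M\<^esub> u a (hp k) = Sq u k \<otimes>\<^bsub>M\<^esub> u (hp k) a"
proof (induction k)
  case 0 then show ?case using kerR_one[OF u A_sub[OF a]] A_sub[OF a] by simp
next
  case (Suc k)
  note uz = kerR_Z2[OF u] note val = Z2_val[OF uz]
  have ac: "a \<in> carrier K" using A_sub[OF a] .
  have e1: "act a (u (hp k) h) \<otimes>\<^bsub>M\<^esub> u a (hp k \<otimes>\<^bsub>K\<^esub> h) = u (a \<otimes>\<^bsub>K\<^esub> hp k) h \<otimes>\<^bsub>M\<^esub> u a (hp k)"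
    using coc[OF uz ac hp_closed hK] .
  have e2: "act (hp k) (u a h) \<otimes>\<^bsub>M\<^esub> u (hp k) (a \<otimes>\<^bsub>K\<^esub> h) = u (hp k \<otimes>\<^bsub>K\<^esub> a) h \<otimes>\<^bsub>M\<^esub> u (hp k) a"
    using coc[OF uz hp_closed ac hK] .
  have e3: "act (hp k) (u h a) \<otimes>\<^bsub>M\<^esub> u (hp k) (h \<otimes>\<^bsub>K\<^esub> a) = u (hp k \<otimes>\<^bsub>K\<^esub> h) a \<otimes>\<^bsub>M\<^esub> u (hp k) h"
    using coc[OF uz hp_closed hK ac] .
  have key: "u (a \<otimes>\<^bsub>K\<^esub> hp k) h \<otimes>\<^bsub>M\<^esub> u (hp k) a = u (hp k \<otimes>\<^bsub>K\<^esub> h) a \<otimes>\<^bsub>M\<^esub> u (hp k) h"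
    using e2 e3 uc[OF a] commK[OF hK ac] commK[OF hp_closed ac] by simp
  have "act a (Sq u (Suc k)) \<otimes>\<^bsub>M\<^esub> u a (hp (Suc k)) =
        act a (Sq u k) \<otimes>\<^bsub>M\<^esub> (act a (u (hp k) h) \<otimes>\<^bsub>M\<^esub> u a (hp k \<otimes>\<^bsub>K\<^esub> h))"
    using ac hK val Sq_val[OF uz] by (simp add: M.m_assoc)
  also have "\<dots> = (act a (Sq u k) \<otimes>\<^bsub>M\<^esub> u a (hp k)) \<otimes>\<^bsub>M\<^esub> u (a \<otimes>\<^bsub>K\<^esub> hp k) h"
    using e1 ac hK val Sq_val[OF uz] by (simp add: M.m_ac)
  also have "\<dots> = Sq u k \<otimes>\<^bsub>M\<^esub> (u (a \<otimes>\<^bsub>K\<^esub> hp k) h \<otimes>\<^bsub>M\<^esub> u (hp k) a)"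
    using Suc ac hK val Sq_val[OF uz] by (simp add: M.m_ac)
  also have "\<dots> = Sq u k \<otimes>\<^bsub>M\<^esub> (u (hp k \<otimes>\<^bsub>K\<^esub> h) a \<otimes>\<^bsub>M\<^esub> u (hp k) h)"
    using key by simp
  also have "\<dots> = Sq u (Suc k) \<otimes>\<^bsub>M\<^esub> u (hp (Suc k)) a"
    using ac hK val Sq_val[OF uz] by (simp add: M.m_ac)
  finally show ?case .
qed

lemma Sq_inv:
  assumes u: "u \<in> kerR" and uc: "\<And>a. a \<in> A \<Longrightarrow> u h a = u a h"
  shows "Sq u nn \<in> invariants K M act"
proof -
  note uz = kerR_Z2[OF u] note val = Z2_val[OF uz]
  let ?S = "Sq u nn"
  have Sc: "?S \<in> carrier M" using Sq_val[OF uz] .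
  have th: "act h ?S = ?S"
  proof -
    have "Sq u (Suc nn) = ?S \<otimes>\<^bsub>M\<^esub> u (hp nn) h" by simp
    moreover have "Sq u (Suc nn) = act h ?S \<otimes>\<^bsub>M\<^esub> u h (hp nn)" using Sq_left[OF u] .
    ultimately show ?thesis using uc[OF nn_props(2)] val[OF hp_closed hK] Sc hK
      by (metis M.r_cancel act_closed)
  qed
  have ta: "act a ?S = ?S" if a: "a \<in> A" for a
    using Sq_A[OF u uc a, of nn] kerR_A[OF u a nn_props(2)] kerR_A[OF u nn_props(2) a] Sc A_sub[OF a] by simp
  have tj: "act (hp j) ?S = ?S" for j
  proof (induction j)
    case 0 then show ?case using Sc by simp
  next
    case (Suc j) then show ?case using act_comp[OF hp_closed hK Sc] th by simp
  qed
  have "act g ?S = ?S" if g: "g \<in> carrier K" for g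
  proof -
    obtain a j where a: "a \<in> A" and gj: "g = a \<otimes>\<^bsub>K\<^esub> hp j" using gen[OF g] by blast
    show ?thesis using act_comp[OF A_sub[OF a] hp_closed Sc] tj ta[OF a] gj by simp
  qed
  then show ?thesis using Sc by (simp add: invariants_def)
qed

end


context step begin

lemma Z2_car: "u \<in> cocycles2 K M act \<Longrightarrow> u \<in> carrier K \<rightarrow>\<^sub>E carrier F1"
  by (auto simp: cocycles2_def)

lemma inv2_val:
  assumes "v \<in> cocycles2 K M act" "x \<in> carrier K" "y \<in> carrier K"
  shows "(inv\<^bsub>F2\<^esub> v) x y = inv\<^bsub>M\<^esub> (v x y)"
  using assms by (simp add: F2_inv[OF Z2_car[OF assms(1)]])

lemma div_val:
  assumes "u \<in> cocycles2 K M act" "v \<in> cocycles2 K M act" "x \<in> carrier K" "y \<in> carrier K"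
  shows "(u \<otimes>\<^bsub>F2\<^esub> inv\<^bsub>F2\<^esub> v) x y = u x y \<otimes>\<^bsub>M\<^esub> inv\<^bsub>M\<^esub> (v x y)"
  using assms by (simp add: F2_inv[OF Z2_car[OF assms(2)]])

lemma div_Z2:
  assumes "u \<in> cocycles2 K M act" "v \<in> cocycles2 K M act"
  shows "u \<otimes>\<^bsub>F2\<^esub> inv\<^bsub>F2\<^esub> v \<in> cocycles2 K M act"
  using assms by (meson subgroup.m_closed subgroup.m_inv_closed Z2_sub)

lemma kerR_div:
  assumes u: "u \<in> kerR" and v: "v \<in> kerR"
  shows "u \<otimes>\<^bsub>F2\<^esub> inv\<^bsub>F2\<^esub> v \<in> kerR"
  using div_Z2[OF kerR_Z2[OF u] kerR_Z2[OF v]] inv2_val[OF kerR_Z2[OF v]]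
    kerR_A[OF u] kerR_A[OF v] A_sub by (simp add: kerR_def)

lemma cfun_div:
  assumes u: "u \<in> kerR" and v: "v \<in> kerR" and a: "a \<in> A"
  shows "cfun (u \<otimes>\<^bsub>F2\<^esub> inv\<^bsub>F2\<^esub> v) a = cfun u a \<otimes>\<^bsub>M\<^esub> inv\<^bsub>M\<^esub> (cfun v a)"
proof -
  note uz = kerR_Z2[OF u] and vz = kerR_Z2[OF v]
  have ac: "a \<in> carrier K" using A_sub[OF a] .
  show ?thesis using div_val[OF uz vz] a ac hK Z2_val[OF uz] Z2_val[OF vz]
    by (simp add: cfun_def M.inv_mult M.m_ac)
qed

lemma Sq_div:
  assumes u: "u \<in> cocycles2 K M act" and v: "v \<in> cocycles2 K M act"
  shows "Sq (u \<otimes>\<^bsub>F2\<^esub> inv\<^bsub>F2\<^esub> v) k = Sq u k \<otimes>\<^bsub>M\<^esub> inv\<^bsub>M\<^esub> (Sq v k)"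
proof (induction k)
  case 0 then show ?case by simp
next
  case (Suc k) then show ?case
    using div_val[OF u v hp_closed hK] Sq_val[OF u] Sq_val[OF v] Z2_val[OF u] Z2_val[OF v] hK
    by (simp add: M.inv_mult M.m_ac)
qed

definition "Dset = {g \<in> carrier K. g \<otimes>\<^bsub>K\<^esub> h \<notin> A} - {\<one>\<^bsub>K\<^esub>}"
definition "theta u = ((\<lambda>g\<in>Dset. u g h), (cfun u, Sq u nn))"

lemma theta_inj:
  assumes hA: "h \<notin> A"
  shows "inj_on theta kerR"
proof (rule inj_onI)
  fix u v assume u: "u \<in> kerR" and v: "v \<in> kerR" and e: "theta u = theta v"
  note uz = kerR_Z2[OF u] and vz = kerR_Z2[OF v]
  let ?w = "u \<otimes>\<^bsub>F2\<^esub> inv\<^bsub>F2\<^esub> v"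
  have w: "?w \<in> kerR" using kerR_div[OF u v] .
  have e1: "(\<lambda>g\<in>Dset. u g h) = (\<lambda>g\<in>Dset. v g h)" and e2: "cfun u = cfun v" and e3: "Sq u nn = Sq v nn"
    using e by (auto simp: theta_def)
  have van: "\<And>g y. g \<in> carrier K \<Longrightarrow> y \<in> carrier K \<Longrightarrow> ?w g y = \<one>\<^bsub>M\<^esub>"
  proof (rule kerR_vanish[OF w hA])
    fix g assume g: "g \<in> carrier K" "g \<otimes>\<^bsub>K\<^esub> h \<notin> A" "g \<noteq> \<one>\<^bsub>K\<^esub>"
    then have "g \<in> Dset" by (simp add: Dset_def)
    then have "u g h = v g h" using e1 by (metis restrict_apply')
    then show "?w g h = \<one>\<^bsub>M\<^esub>" using div_val[OF uz vz g(1) hK] Z2_val[OF vz g(1) hK] by simp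
  next
    fix a assume a: "a \<in> A"
    have cv: "cfun v a \<in> carrier M" using Z2_val[OF vz] hK A_sub[OF a] a by (simp add: cfun_def)
    have "cfun ?w a = cfun v a \<otimes>\<^bsub>M\<^esub> inv\<^bsub>M\<^esub> (cfun v a)" using cfun_div[OF u v a] e2 by simp
    then have "cfun ?w a = \<one>\<^bsub>M\<^esub>" using cv by simp
    then have "?w h a \<otimes>\<^bsub>M\<^esub> inv\<^bsub>M\<^esub> (?w a h) = \<one>\<^bsub>M\<^esub>" using a by (simp add: cfun_def)
    then show "?w h a = ?w a h" using M_div_one Z2_val[OF kerR_Z2[OF w]] hK A_sub[OF a] by simp
  next
    show "Sq ?w nn = \<one>\<^bsub>M\<^esub>" using Sq_div[OF uz vz] e3 Sq_val[OF vz] by simp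
  qed
  have "u g y = v g y" if "g \<in> carrier K" "y \<in> carrier K" for g y
  proof -
    have "u g y \<otimes>\<^bsub>M\<^esub> inv\<^bsub>M\<^esub> (v g y) = \<one>\<^bsub>M\<^esub>" using van[OF that] div_val[OF uz vz that] by simp
    then show ?thesis using M_div_one Z2_val[OF uz that] Z2_val[OF vz that] by simp
  qed
  note eq = this
  show "u = v"
  proof (rule PiE_ext[OF Z2_car[OF uz] Z2_car[OF vz]])
    fix x assume x: "x \<in> carrier K"
    have ux: "u x \<in> carrier K \<rightarrow>\<^sub>E carrier M" using PiE_mem[OF Z2_car[OF uz] x] by simp
    have vx: "v x \<in> carrier K \<rightarrow>\<^sub>E carrier M" using PiE_mem[OF Z2_car[OF vz] x] by simp
    show "u x = v x" by (rule PiE_ext[OF ux vx]) (rule eq[OF x])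
  qed
qed

lemma finite_Z2: "finite (cocycles2 K M act)"
  by (rule finite_subset[OF _ finite_PiE[OF finK, of "\<lambda>_. carrier K \<rightarrow>\<^sub>E carrier M"]])
     (use finM finK finite_PiE in \<open>auto simp: cocycles2_def\<close>)

lemma finite_A: "finite A" using finite_subset[OF subgroup.subset[OF subA] finK] .

lemma finite_Z1A: "finite (cocycles1 KA M act)"
  by (rule finite_subset[OF _ finite_PiE[OF finite_A, of "\<lambda>_. carrier M"]]) (use finM in \<open>auto simp: cocycles1_def\<close>)

lemma finite_Z2A: "finite (cocycles2 KA M act)"
  by (rule finite_subset[OF _ finite_PiE[OF finite_A, of "\<lambda>_. A \<rightarrow>\<^sub>E carrier M"]])
     (use finM finite_A finite_PiE in \<open>auto simp: cocycles2_def\<close>)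

lemma finite_kerR: "finite kerR" using finite_Z2 by (rule finite_subset[rotated]) (auto simp: kerR_def)

lemma cfun_eq_uc:
  assumes u: "u \<in> kerR" and v: "v \<in> kerR" and e: "cfun u = cfun v" and a: "a \<in> A"
  shows "(u \<otimes>\<^bsub>F2\<^esub> inv\<^bsub>F2\<^esub> v) h a = (u \<otimes>\<^bsub>F2\<^esub> inv\<^bsub>F2\<^esub> v) a h"
proof -
  note vz = kerR_Z2[OF v]
  let ?w = "u \<otimes>\<^bsub>F2\<^esub> inv\<^bsub>F2\<^esub> v"
  have w: "?w \<in> kerR" using kerR_div[OF u v] .
  have cv: "cfun v a \<in> carrier M" using Z2_val[OF vz] hK A_sub[OF a] a by (simp add: cfun_def)
  have "cfun ?w a = cfun v a \<otimes>\<^bsub>M\<^esub> inv\<^bsub>M\<^esub> (cfun v a)" using cfun_div[OF u v a] e by simp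
  then have "cfun ?w a = \<one>\<^bsub>M\<^esub>" using cv by simp
  then have "?w h a \<otimes>\<^bsub>M\<^esub> inv\<^bsub>M\<^esub> (?w a h) = \<one>\<^bsub>M\<^esub>" using a by (simp add: cfun_def)
  then show ?thesis using M_div_one Z2_val[OF kerR_Z2[OF w]] hK A_sub[OF a] by simp
qed

definition "Pset = (\<lambda>u. (cfun u, Sq u nn)) ` kerR"

lemma card_Pset: "card Pset \<le> card (cocycles1 KA M act) * card (invariants K M act)"
proof (rule card_fibers_le[where \<phi>=fst])
  show "finite Pset" unfolding Pset_def using finite_kerR by simp
  show "fst ` Pset \<subseteq> cocycles1 KA M act" unfolding Pset_def using cfun_Z1 by auto
  show "finite (cocycles1 KA M act)" by (rule finite_Z1A)
next
  fix s assume "s \<in> Pset"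
  then obtain u0 where u0: "u0 \<in> kerR" and s: "s = (cfun u0, Sq u0 nn)" unfolding Pset_def by auto
  let ?F = "{s' \<in> Pset. fst s' = fst s}"
  let ?m = "\<lambda>s'. snd s' \<otimes>\<^bsub>M\<^esub> inv\<^bsub>M\<^esub> (Sq u0 nn)"
  have S0: "Sq u0 nn \<in> carrier M" using Sq_val[OF kerR_Z2[OF u0]] .
  have Pc: "snd p \<in> carrier M" if "p \<in> Pset" for p using that Sq_val kerR_Z2 unfolding Pset_def by auto
  have inj: "inj_on ?m ?F"
  proof (rule inj_onI)
    fix p q assume p: "p \<in> ?F" and q: "q \<in> ?F" and e: "?m p = ?m q"
    have pq: "p \<in> Pset" "q \<in> Pset" using p q by auto
    have "snd p = snd q" using M.r_cancel[of "inv\<^bsub>M\<^esub> (Sq u0 nn)" "snd p" "snd q"] e Pc[OF pq(1)] Pc[OF pq(2)] S0 by simp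
    moreover have "fst p = fst q" using p q by simp
    ultimately show "p = q" by (simp add: prod_eq_iff)
  qed
  have sub: "?m ` ?F \<subseteq> invariants K M act"
  proof
    fix x assume "x \<in> ?m ` ?F"
    then obtain p where p: "p \<in> ?F" and x: "x = ?m p" by auto
    obtain u where u: "u \<in> kerR" and pu: "p = (cfun u, Sq u nn)" using p unfolding Pset_def by auto
    have e: "cfun u = cfun u0" using p pu s by simp
    let ?w = "u \<otimes>\<^bsub>F2\<^esub> inv\<^bsub>F2\<^esub> u0"
    have "Sq ?w nn \<in> invariants K M act"
      by (rule Sq_inv[OF kerR_div[OF u u0]]) (rule cfun_eq_uc[OF u u0 e])
    then show "x \<in> invariants K M act" using Sq_div[OF kerR_Z2[OF u] kerR_Z2[OF u0]] x pu by simp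
  qed
  have fi: "finite (invariants K M act)" using finM by (auto simp: invariants_def)
  have "card ?F = card (?m ` ?F)" using card_image[OF inj] by simp
  also have "\<dots> \<le> card (invariants K M act)" by (rule card_mono[OF fi sub])
  finally show "card ?F \<le> card (invariants K M act)" .
qed

lemma card_Dset:
  assumes hA: "h \<notin> A"
  shows "card Dset + card A + 1 = card (carrier K)"
proof -
  let ?I = "(\<lambda>a. a \<otimes>\<^bsub>K\<^esub> inv\<^bsub>K\<^esub> h) ` A"
  have I: "{g \<in> carrier K. g \<otimes>\<^bsub>K\<^esub> h \<in> A} = ?I"
  proof (intro equalityI subsetI)
    fix g assume "g \<in> {g \<in> carrier K. g \<otimes>\<^bsub>K\<^esub> h \<in> A}"
    then have g: "g \<in> carrier K" "g \<otimes>\<^bsub>K\<^esub> h \<in> A" by auto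
    have "g = (g \<otimes>\<^bsub>K\<^esub> h) \<otimes>\<^bsub>K\<^esub> inv\<^bsub>K\<^esub> h" using g hK by (simp add: K.m_assoc)
    then show "g \<in> ?I" using g by blast
  next
    fix g assume "g \<in> ?I"
    then obtain a where a: "a \<in> A" "g = a \<otimes>\<^bsub>K\<^esub> inv\<^bsub>K\<^esub> h" by auto
    then show "g \<in> {g \<in> carrier K. g \<otimes>\<^bsub>K\<^esub> h \<in> A}" using A_sub[OF a(1)] hK by (simp add: K.m_assoc)
  qed
  have cI: "card ?I = card A"
    by (rule card_image) (use A_sub hK in \<open>auto simp: inj_on_def\<close>)
  have IK: "?I \<subseteq> carrier K" using A_sub hK by auto
  have D: "Dset = (carrier K - ?I) - {\<one>\<^bsub>K\<^esub>}" unfolding Dset_def using I by blast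
  have "\<one>\<^bsub>K\<^esub> \<notin> ?I"
  proof
    assume "\<one>\<^bsub>K\<^esub> \<in> ?I"
    then obtain a where a: "a \<in> A" "\<one>\<^bsub>K\<^esub> = a \<otimes>\<^bsub>K\<^esub> inv\<^bsub>K\<^esub> h" by auto
    have "a = (a \<otimes>\<^bsub>K\<^esub> inv\<^bsub>K\<^esub> h) \<otimes>\<^bsub>K\<^esub> h" using A_sub[OF a(1)] hK by (simp add: K.m_assoc)
    also have "\<dots> = \<one>\<^bsub>K\<^esub> \<otimes>\<^bsub>K\<^esub> h" by (simp only: a(2)[symmetric])
    finally have "a = h" using hK by simp
    then show False using a(1) hA by simp
  qed
  then have one: "\<one>\<^bsub>K\<^esub> \<in> carrier K - ?I" by simp
  have "card Dset = card (carrier K - ?I) - 1" unfolding D using one finK by simp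
  moreover have "card (carrier K - ?I) = card (carrier K) - card A"
    using card_Diff_subset[OF finite_subset[OF IK finK] IK] cI by simp
  moreover have "card (carrier K - ?I) \<ge> 1"
  proof -
    have "card (carrier K - ?I) \<noteq> 0" using one finK by auto
    then show ?thesis by simp
  qed
  moreover have "card A \<le> card (carrier K)" using card_mono[OF finK subgroup.subset[OF subA]] .
  ultimately show ?thesis by linarith
qed

lemma card_kerR:
  assumes hA: "h \<notin> A"
  shows "card kerR \<le> card (carrier M) ^ card Dset * card Pset"
proof -
  have fD: "finite Dset" using finK by (simp add: Dset_def)
  have fP: "finite Pset" unfolding Pset_def using finite_kerR by simp
  have sub: "theta ` kerR \<subseteq> (Dset \<rightarrow>\<^sub>E carrier M) \<times> Pset"
  proof
    fix x assume "x \<in> theta ` kerR"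
    then obtain u where u: "u \<in> kerR" and x: "x = theta u" by auto
    have "(\<lambda>g\<in>Dset. u g h) \<in> Dset \<rightarrow>\<^sub>E carrier M"
      unfolding restrict_PiE_iff using Z2_val[OF kerR_Z2[OF u] _ hK] by (auto simp: Dset_def)
    moreover have "(cfun u, Sq u nn) \<in> Pset" using u unfolding Pset_def by blast
    ultimately show "x \<in> (Dset \<rightarrow>\<^sub>E carrier M) \<times> Pset" unfolding x theta_def by simp
  qed
  have "card kerR \<le> card ((Dset \<rightarrow>\<^sub>E carrier M) \<times> Pset)"
    by (rule card_inj_on_le[OF theta_inj[OF hA] sub]) (rule finite_cartesian_product[OF finite_PiE[OF fD] fP], use finM in auto)
  also have "\<dots> = card (carrier M) ^ card Dset * card Pset"
    by (simp add: card_cartesian_product card_PiE[OF fD])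
  finally show ?thesis .
qed

definition "res2 f = (\<lambda>x\<in>A. \<lambda>y\<in>A. f x y)"

lemma card_Z2_step: "card (cocycles2 K M act) \<le> card (cocycles2 KA M act) * card kerR"
proof (rule card_fibers_le[where \<phi>=res2])
  show "finite (cocycles2 K M act)" by (rule finite_Z2)
  show "res2 ` cocycles2 K M act \<subseteq> cocycles2 KA M act"
    using A_sub subgroup.m_closed[OF subA] by (auto simp: cocycles2_def res2_def PiE_iff)
  show "finite (cocycles2 KA M act)" by (rule finite_Z2A)
next
  fix f0 assume f0: "f0 \<in> cocycles2 K M act"
  let ?F = "{f \<in> cocycles2 K M act. res2 f = res2 f0}"
  let ?m = "\<lambda>f. f \<otimes>\<^bsub>F2\<^esub> inv\<^bsub>F2\<^esub> f0"
  have Zc: "f \<in> carrier F2" if "f \<in> cocycles2 K M act" for f using that Z2_car by simp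
  have inj: "inj_on ?m ?F"
  proof (rule inj_onI)
    fix f f' assume f: "f \<in> ?F" and f': "f' \<in> ?F" and e: "?m f = ?m f'"
    have c: "f \<in> carrier F2" "f' \<in> carrier F2" "inv\<^bsub>F2\<^esub> f0 \<in> carrier F2"
      using Zc f f' F2.inv_closed[OF Zc[OF f0]] by auto
    show "f = f'" by (rule F2.r_cancel[OF e c(1) c(2) c(3)])
  qed
  have sub: "?m ` ?F \<subseteq> kerR"
  proof
    fix x assume "x \<in> ?m ` ?F"
    then obtain f where f: "f \<in> ?F" and x: "x = ?m f" by auto
    have fz: "f \<in> cocycles2 K M act" using f by simp
    have "f a b = f0 a b" if "a \<in> A" "b \<in> A" for a b
    proof -
      have "res2 f a b = res2 f0 a b" using f by simp
      then show ?thesis using that by (simp add: res2_def)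
    qed
    then show "x \<in> kerR" using div_Z2[OF fz f0] inv2_val[OF f0] Z2_val[OF f0] A_sub x
      by (simp add: kerR_def)
  qed
  have "card ?F = card (?m ` ?F)" using card_image[OF inj] by simp
  also have "\<dots> \<le> card kerR" by (rule card_mono[OF finite_kerR sub])
  finally show "card ?F \<le> card kerR" .
qed

end


context gmod begin
lemma B1_pos: "finite (carrier M) \<Longrightarrow> 0 < card (coboundaries1 K M act)"
proof -
  assume f: "finite (carrier M)"
  have "bet \<one>\<^bsub>M\<^esub> \<in> coboundaries1 K M act" unfolding B1_img by simp
  moreover have "finite (coboundaries1 K M act)" unfolding B1_img using f by simp
  ultimately show ?thesis by (metis card_gt_0_iff empty_iff)
qed

lemma H1_pos: "finite (carrier K) \<Longrightarrow> finite (carrier M) \<Longrightarrow> 0 < card (H1 K M act)"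
proof -
  assume fK: "finite (carrier K)" and fM: "finite (carrier M)"
  have "0 < card (cocycles1 K M act)"
  proof -
    have "(\<lambda>x\<in>carrier K. \<one>\<^bsub>M\<^esub>) \<in> cocycles1 K M act" by (auto simp: cocycles1_def)
    moreover have "finite (cocycles1 K M act)"
      by (rule finite_subset[OF _ finite_PiE[OF fK, of "\<lambda>_. carrier M"]]) (use fM in \<open>auto simp: cocycles1_def\<close>)
    ultimately show ?thesis by (metis card_gt_0_iff empty_iff)
  qed
  then show ?thesis using card_H1[OF fK fM] by (metis mult_is_0 not_gr_zero)
qed
end

context step begin

lemma H1_step: "card (H1 K M act) \<le> card (H1 KA M act) * card (invariants K M act)"
proof -
  have fA: "finite (carrier KA)" using finite_A by simp
  have a1: "card (H1 K M act) * card (coboundaries1 K M act) = card (cocycles1 K M act)"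
    using card_H1[OF finK finM] .
  have a3: "card (H1 KA M act) * card (coboundaries1 KA M act) = card (cocycles1 KA M act)"
    using SA.card_H1[OF fA finM] .
  have a4: "card (coboundaries1 KA M act) * card (invariants KA M act) = card (carrier M)"
    using SA.card_B1[OF finM] .
  have a5: "card (coboundaries1 K M act) * card (invariants K M act) = card (carrier M)"
    using card_B1[OF finM] .
  have "card (H1 K M act) * card (coboundaries1 K M act) \<le> card (cocycles1 KA M act) * card (invariants KA M act)"
    using a1 card_Z1_step by simp
  also have "\<dots> = card (H1 KA M act) * card (carrier M)" using a3 a4 by (metis mult.assoc)
  also have "\<dots> = (card (H1 KA M act) * card (invariants K M act)) * card (coboundaries1 K M act)"
    using a5 by (simp add: ac_simps)
  finally show ?thesis using B1_pos[OF finM] by simp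
qed

lemma H2_step: "card (H2 K M act) \<le> card (H2 KA M act) * card (H1 K M act)"
proof (cases "h \<in> A")
  case True
  have "carrier K = A"
  proof
    show "carrier K \<subseteq> A"
    proof
      fix g assume "g \<in> carrier K"
      then obtain a j where a: "a \<in> A" and g: "g = a \<otimes>\<^bsub>K\<^esub> hp j" using gen by blast
      have "hp j \<in> A" using True by (induction j) (auto intro: subgroup.m_closed[OF subA] subgroup.one_closed[OF subA])
      then show "g \<in> A" using g a subgroup.m_closed[OF subA] by simp
    qed
    show "A \<subseteq> carrier K" using subgroup.subset[OF subA] .
  qed
  then have "KA = K" by simp
  then show ?thesis using H1_pos[OF finK finM] by simp
next
  case False
  note hA = False
  have fA: "finite (carrier KA)" using finite_A by simp
  let ?m = "card (carrier M)"
  have c1: "card (H2 K M act) * card (coboundaries2 K M act) = card (cocycles2 K M act)"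
    using card_H2[OF finK finM] .
  have c4: "card (H2 KA M act) * card (coboundaries2 KA M act) = card (cocycles2 KA M act)"
    using SA.card_H2[OF fA finM] .
  have c5: "card (coboundaries2 KA M act) * card (cocycles1 KA M act) = ?m ^ card A"
    using SA.card_B2[OF fA finM] by simp
  have c6: "card (coboundaries2 K M act) * card (cocycles1 K M act) = ?m ^ card (carrier K)"
    using card_B2[OF finK finM] .
  have c7: "card (H1 K M act) * card (coboundaries1 K M act) = card (cocycles1 K M act)"
    using card_H1[OF finK finM] .
  have c8: "card (coboundaries1 K M act) * card (invariants K M act) = ?m"
    using card_B1[OF finM] .
  have c9: "card Dset + card A + 1 = card (carrier K)" using card_Dset[OF hA] .
  have kb: "card kerR \<le> ?m ^ card Dset * (card (cocycles1 KA M act) * card (invariants K M act))"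
    using card_kerR[OF hA] card_Pset by (meson le_trans mult_le_mono2)
  have "card (H2 K M act) * ?m ^ card (carrier K) = card (cocycles2 K M act) * card (cocycles1 K M act)"
    using c1 c6 by (metis mult.assoc)
  also have "\<dots> \<le> (card (cocycles2 KA M act) * card kerR) * card (cocycles1 K M act)"
    using card_Z2_step by simp
  also have "\<dots> \<le> (card (cocycles2 KA M act) * (?m ^ card Dset * (card (cocycles1 KA M act) * card (invariants K M act)))) * card (cocycles1 K M act)"
    using kb by simp
  also have "\<dots> = card (H2 KA M act) * card (H1 K M act) *
      ((card (coboundaries2 KA M act) * card (cocycles1 KA M act)) * ?m ^ card Dset *
       (card (coboundaries1 K M act) * card (invariants K M act)))"
    unfolding c4[symmetric] c7[symmetric] by (simp add: ac_simps)
  also have "\<dots> = card (H2 KA M act) * card (H1 K M act) * ?m ^ card (carrier K)"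
    unfolding c5 c8 c9[symmetric] by (simp add: power_add ac_simps)
  finally have "card (H2 K M act) * ?m ^ card (carrier K) \<le> card (H2 KA M act) * card (H1 K M act) * ?m ^ card (carrier K)" .
  moreover have "0 < ?m ^ card (carrier K)" using finM M.one_closed by (metis card_gt_0_iff empty_iff zero_less_power)
  ultimately show ?thesis using mult_le_cancel2 by blast
qed

end


lemma (in group) inv_pow_ord:
  assumes "finite (carrier G)" "h \<in> carrier G"
  shows "inv h = h [^] (ord h - 1)"
proof -
  have "ord h \<ge> 1" using ord_ge_1[OF assms] .
  then have "h [^] (ord h - 1) \<otimes> h = h [^] ord h" using assms(2) nat_pow_Suc[of h "ord h - 1"] by simp
  also have "\<dots> = \<one>" using assms(2) by simp
  finally show ?thesis using assms(2) by (metis inv_equality nat_pow_closed)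
qed

lemma (in comm_group) gen_form:
  assumes fin: "finite (carrier G)" and A: "subgroup A G" and h: "h \<in> carrier G" and H: "H \<subseteq> A \<union> {h}"
  shows "generate G H \<subseteq> {a \<otimes> h [^] (j::nat) | a j. a \<in> A}"
proof
  fix g assume "g \<in> generate G H"
  then show "g \<in> {a \<otimes> h [^] (j::nat) | a j. a \<in> A}"
  proof (induction)
    case one
    have "\<one> = \<one> \<otimes> h [^] (0::nat)" by simp
    then show ?case using subgroup.one_closed[OF A] by blast
  next
    case (incl g)
    then consider "g \<in> A" | "g = h" using H by blast
    then show ?case
    proof cases
      case 1 then have "g = g \<otimes> h [^] (0::nat)" using subgroup.mem_carrier[OF A] by simp
      then show ?thesis using 1 by blast
    next
      case 2 then have "g = \<one> \<otimes> h [^] (1::nat)" using h by simp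
      then show ?thesis using subgroup.one_closed[OF A] by blast
    qed
  next
    case (inv g)
    then consider "g \<in> A" | "g = h" using H by blast
    then show ?case
    proof cases
      case 1 then have "inv g = inv g \<otimes> h [^] (0::nat)" using subgroup.mem_carrier[OF A] by simp
      then show ?thesis using subgroup.m_inv_closed[OF A 1] by blast
    next
      case 2 then have "inv g = \<one> \<otimes> h [^] (ord h - 1)" using h inv_pow_ord[OF fin h] by simp
      then show ?thesis using subgroup.one_closed[OF A] by blast
    qed
  next
    case (eng g1 g2)
    then obtain a1 j1 a2 j2 where a: "a1 \<in> A" "a2 \<in> A" "g1 = a1 \<otimes> h [^] (j1::nat)" "g2 = a2 \<otimes> h [^] (j2::nat)" by blast
    have ac: "a1 \<in> carrier G" "a2 \<in> carrier G" using a subgroup.mem_carrier[OF A] by auto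
    have "g1 \<otimes> g2 = (a1 \<otimes> a2) \<otimes> h [^] (j1 + j2)"
      using ac h by (simp add: a(3,4) nat_pow_mult[symmetric] m_ac)
    then show ?case using subgroup.m_closed[OF A a(1,2)] by blast
  qed
qed

lemma (in gmod) inv_gen:
  assumes "H \<subseteq> carrier K" "m \<in> carrier M" "\<forall>g\<in>H. act g m = m"
  shows "\<forall>g\<in>generate K H. act g m = m"
proof
  fix g assume "g \<in> generate K H"
  then show "act g m = m"
  proof induction
    case one then show ?case using assms by simp
  next
    case (incl g) then show ?case using assms by simp
  next
    case (inv g)
    have gc: "g \<in> carrier K" using inv assms(1) by auto
    have "act (inv\<^bsub>K\<^esub> g) m = act (inv\<^bsub>K\<^esub> g) (act g m)" using inv assms by simp
    also have "\<dots> = act (inv\<^bsub>K\<^esub> g \<otimes>\<^bsub>K\<^esub> g) m" using act_comp[of "inv\<^bsub>K\<^esub> g" g m] gc assms by simp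
    also have "\<dots> = m" using gc assms by simp
    finally show ?case .
  next
    case (eng g1 g2)
    have "g1 \<in> carrier K" "g2 \<in> carrier K"
      using eng.hyps K.generate_incl assms(1) by blast+
    then show ?case using act_comp eng assms by simp
  qed
qed

lemma (in gmod) trivial_H:
  assumes "carrier K = {\<one>\<^bsub>K\<^esub>}" "finite (carrier M)"
  shows "card (H1 K M act) \<le> 1" "card (H2 K M act) \<le> 1"
proof -
  have fK: "finite (carrier K)" using assms by simp
  have Z1: "cocycles1 K M act \<subseteq> {\<lambda>x\<in>carrier K. \<one>\<^bsub>M\<^esub>}"
  proof
    fix f assume f: "f \<in> cocycles1 K M act"
    have "f (\<one>\<^bsub>K\<^esub> \<otimes>\<^bsub>K\<^esub> \<one>\<^bsub>K\<^esub>) = f \<one>\<^bsub>K\<^esub> \<otimes>\<^bsub>M\<^esub> act \<one>\<^bsub>K\<^esub> (f \<one>\<^bsub>K\<^esub>)"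
      using f unfolding cocycles1_def by blast
    then have "f \<one>\<^bsub>K\<^esub> = f \<one>\<^bsub>K\<^esub> \<otimes>\<^bsub>M\<^esub> act \<one>\<^bsub>K\<^esub> (f \<one>\<^bsub>K\<^esub>)" by simp
    then have "f \<one>\<^bsub>K\<^esub> = \<one>\<^bsub>M\<^esub>" using f by (auto simp: cocycles1_def PiE_iff)
    then show "f \<in> {\<lambda>x\<in>carrier K. \<one>\<^bsub>M\<^esub>}" using f assms(1)
      by (auto simp: cocycles1_def PiE_iff extensional_def fun_eq_iff)
  qed
  have "card (cocycles1 K M act) \<le> 1" using card_mono[OF _ Z1] by simp
  moreover have "card (H1 K M act) \<le> card (H1 K M act) * card (coboundaries1 K M act)"
    using B1_pos[OF assms(2)] by simp
  ultimately show "card (H1 K M act) \<le> 1" using card_H1[OF fK assms(2)] by simp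
  have sub: "cocycles2 K M act \<subseteq> coboundaries2 K M act"
  proof
    fix f assume f: "f \<in> cocycles2 K M act"
    let ?\<phi> = "\<lambda>x\<in>carrier K. f \<one>\<^bsub>K\<^esub> \<one>\<^bsub>K\<^esub>"
    have fv: "f \<one>\<^bsub>K\<^esub> \<one>\<^bsub>K\<^esub> \<in> carrier M" using f by (auto simp: cocycles2_def PiE_iff)
    have fP: "f \<in> carrier K \<rightarrow>\<^sub>E (carrier K \<rightarrow>\<^sub>E carrier M)" using f by (simp add: cocycles2_def)
    have phi: "?\<phi> \<in> carrier K \<rightarrow>\<^sub>E carrier M" using fv by simp
    have "\<forall>g\<in>carrier K. \<forall>h\<in>carrier K. f g h = act g (?\<phi> h) \<otimes>\<^bsub>M\<^esub> inv\<^bsub>M\<^esub> (?\<phi> (g \<otimes>\<^bsub>K\<^esub> h)) \<otimes>\<^bsub>M\<^esub> ?\<phi> g"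
      using assms(1) fv by simp
    then show "f \<in> coboundaries2 K M act" unfolding coboundaries2_def using fP phi by blast
  qed
  have finB2: "finite (coboundaries2 K M act)" unfolding B2_img using fK assms(2) by (simp add: finite_PiE)
  have le: "card (cocycles2 K M act) \<le> card (coboundaries2 K M act)" by (rule card_mono[OF finB2 sub])
  have pos: "0 < card (coboundaries2 K M act)"
  proof -
    have "del (\<one>\<^bsub>F1\<^esub>) \<in> coboundaries2 K M act" unfolding B2_img by (rule imageI[OF F1.one_closed])
    then show ?thesis using finB2 card_gt_0_iff by blast
  qed
  have "card (H2 K M act) * card (coboundaries2 K M act) \<le> 1 * card (coboundaries2 K M act)"
    using card_H2[OF fK assms(2)] le by simp
  then show "card (H2 K M act) \<le> 1" using pos by simp
qed


lemma chain:
  fixes G :: "('g,'a) monoid_scheme" and M :: "('m,'b) monoid_scheme" and act and x :: 'g and hs :: "'g list"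
  assumes G: "comm_group G" and fG: "finite (carrier G)" and fM: "finite (carrier M)"
    and ma: "module_action G M act" and x: "x \<in> carrier G" and hs: "set hs \<subseteq> carrier G"
    and triv: "\<forall>h\<in>set hs. \<forall>m\<in>carrier M. act h m = m"
  shows "card (H1 (G\<lparr>carrier := generate G (insert x (set hs))\<rparr>) M act) \<le> card {m \<in> carrier M. act x m = m} ^ Suc (length hs)
       \<and> card (H2 (G\<lparr>carrier := generate G (insert x (set hs))\<rparr>) M act) \<le> card {m \<in> carrier M. act x m = m} ^ (Suc (length hs))^2"
proof -
  interpret G: comm_group G by fact
  let ?c = "card {m \<in> carrier M. act x m = m}"
  let ?S = "\<lambda>l. generate G (insert x (set l))"
  have subS: "subgroup (?S l) G" if "set l \<subseteq> carrier G" for l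
    by (rule G.generate_is_subgroup) (use that x in auto)
  have maS: "module_action (G\<lparr>carrier := ?S l\<rparr>) M act" if "set l \<subseteq> carrier G" for l
    by (rule ma_sub[OF ma subS[OF that]])
  have invS: "invariants (G\<lparr>carrier := ?S l\<rparr>) M act = {m \<in> carrier M. act x m = m}"
    if "set l \<subseteq> carrier G" "\<forall>h\<in>set l. \<forall>m\<in>carrier M. act h m = m" for l
  proof (intro equalityI subsetI)
    fix m assume "m \<in> invariants (G\<lparr>carrier := ?S l\<rparr>) M act"
    moreover have "x \<in> ?S l" by (rule generate.incl) simp
    ultimately show "m \<in> {m \<in> carrier M. act x m = m}" by (auto simp: invariants_def)
  next
    fix m assume m: "m \<in> {m \<in> carrier M. act x m = m}"
    interpret gG: gmod G M act by unfold_locales (rule ma)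
    have "\<forall>g\<in>?S l. act g m = m"
      by (rule gG.inv_gen) (use that x m in auto)
    then show "m \<in> invariants (G\<lparr>carrier := ?S l\<rparr>) M act" using m by (auto simp: invariants_def)
  qed
  have cpos: "1 \<le> ?c"
  proof -
    interpret gG: gmod G M act by unfold_locales (rule ma)
    have "\<one>\<^bsub>M\<^esub> \<in> {m \<in> carrier M. act x m = m}" using x by simp
    moreover have "finite {m \<in> carrier M. act x m = m}" using fM by simp
    ultimately have "0 < ?c" using card_gt_0_iff by blast
    then show ?thesis by simp
  qed
  have finS: "finite (?S l)" if "set l \<subseteq> carrier G" for l
    using finite_subset[OF subgroup.subset[OF subS[OF that]] fG] .
  have comm: "\<And>a b. a \<in> ?S l \<Longrightarrow> b \<in> ?S l \<Longrightarrow> a \<otimes>\<^bsub>G\<^esub> b = b \<otimes>\<^bsub>G\<^esub> a" if "set l \<subseteq> carrier G" for l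
    using subgroup.subset[OF subS[OF that]] G.m_comm by blast
  show ?thesis using hs triv
  proof (induction hs)
    case Nil
    let ?K = "G\<lparr>carrier := ?S []\<rparr>"
    have st: "step ?K M act {\<one>\<^bsub>G\<^esub>} x"
    proof (intro step.intro gmod.intro step_axioms.intro)
      show "module_action ?K M act" using maS[of "[]"] by simp
      show "\<And>a b. a \<in> carrier ?K \<Longrightarrow> b \<in> carrier ?K \<Longrightarrow> a \<otimes>\<^bsub>?K\<^esub> b = b \<otimes>\<^bsub>?K\<^esub> a"
        using comm[of "[]"] by simp
      show "subgroup {\<one>\<^bsub>G\<^esub>} ?K"
        using G.subgroup_incl[OF G.triv_subgroup subS[of "[]"]] subgroup.one_closed[OF subS[of "[]"]] by simp
      show "x \<in> carrier ?K" by (simp add: generate.incl)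
      show "\<And>g. g \<in> carrier ?K \<Longrightarrow> \<exists>a\<in>{\<one>\<^bsub>G\<^esub>}. \<exists>j::nat. g = a \<otimes>\<^bsub>?K\<^esub> x [^]\<^bsub>?K\<^esub> j"
        using G.gen_form[OF fG G.triv_subgroup x, of "{x}"] by (auto simp: G.nat_pow_consistent[symmetric])
      show "finite (carrier ?K)" using finS[of "[]"] by simp
      show "finite (carrier M)" by fact
    qed
    have KA: "?K\<lparr>carrier := {\<one>\<^bsub>G\<^esub>}\<rparr> = G\<lparr>carrier := {\<one>\<^bsub>G\<^esub>}\<rparr>" by simp
    have maT: "module_action (G\<lparr>carrier := {\<one>\<^bsub>G\<^esub>}\<rparr>) M act" by (rule ma_sub[OF ma G.triv_subgroup])
    have t1: "card (H1 (G\<lparr>carrier := {\<one>\<^bsub>G\<^esub>}\<rparr>) M act) \<le> 1" and t2: "card (H2 (G\<lparr>carrier := {\<one>\<^bsub>G\<^esub>}\<rparr>) M act) \<le> 1"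
      using gmod.trivial_H[OF gmod.intro[OF maT] _ fM] by auto
    have inv: "invariants ?K M act = {m \<in> carrier M. act x m = m}" using invS[of "[]"] by simp
    have h1: "card (H1 ?K M act) \<le> ?c"
    proof -
      have "card (H1 ?K M act) \<le> card (H1 (G\<lparr>carrier := {\<one>\<^bsub>G\<^esub>}\<rparr>) M act) * ?c"
        using step.H1_step[OF st] inv KA by simp
      also have "\<dots> \<le> 1 * ?c" using t1 by (rule mult_le_mono1)
      finally show ?thesis by simp
    qed
    have h2: "card (H2 ?K M act) \<le> ?c"
    proof -
      have "card (H2 ?K M act) \<le> card (H2 (G\<lparr>carrier := {\<one>\<^bsub>G\<^esub>}\<rparr>) M act) * card (H1 ?K M act)"
        using step.H2_step[OF st] KA by simp
      also have "\<dots> \<le> 1 * ?c" using t2 h1 by (rule mult_le_mono)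
      finally show ?thesis by simp
    qed
    show ?case using h1 h2 by simp
  next
    case (Cons h l)
    have lc: "set l \<subseteq> carrier G" and hc: "h \<in> carrier G" using Cons.prems by auto
    have lt: "\<forall>h\<in>set l. \<forall>m\<in>carrier M. act h m = m" using Cons.prems by auto
    have IH: "card (H1 (G\<lparr>carrier := ?S l\<rparr>) M act) \<le> ?c ^ Suc (length l)"
      "card (H2 (G\<lparr>carrier := ?S l\<rparr>) M act) \<le> ?c ^ (Suc (length l))^2"
      using Cons.IH[OF lc lt] by auto
    let ?K = "G\<lparr>carrier := ?S (h # l)\<rparr>"
    have hl: "set (h # l) \<subseteq> carrier G" using Cons.prems by simp
    have mono: "?S l \<subseteq> ?S (h # l)" by (rule G.mono_generate) auto
    have st: "step ?K M act (?S l) h"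
    proof (intro step.intro gmod.intro step_axioms.intro)
      show "module_action ?K M act" using maS[OF hl] .
      show "\<And>a b. a \<in> carrier ?K \<Longrightarrow> b \<in> carrier ?K \<Longrightarrow> a \<otimes>\<^bsub>?K\<^esub> b = b \<otimes>\<^bsub>?K\<^esub> a"
        using comm[OF hl] by simp
      show "subgroup (?S l) ?K"
        using G.subgroup_incl[OF subS[OF lc] subS[OF hl] mono] .
      show "h \<in> carrier ?K" by (simp add: generate.incl)
      have gf: "?S (h # l) \<subseteq> {a \<otimes>\<^bsub>G\<^esub> h [^]\<^bsub>G\<^esub> (j::nat) | a j. a \<in> ?S l}"
        by (rule G.gen_form[OF fG subS[OF lc] hc]) (auto intro: generate.incl)
      show "\<And>g. g \<in> carrier ?K \<Longrightarrow> \<exists>a\<in>?S l. \<exists>j::nat. g = a \<otimes>\<^bsub>?K\<^esub> h [^]\<^bsub>?K\<^esub> j"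
        using gf by (auto simp: G.nat_pow_consistent[symmetric])
      show "finite (carrier ?K)" using finS[OF hl] by simp
      show "finite (carrier M)" by fact
    qed
    have KA: "?K\<lparr>carrier := ?S l\<rparr> = G\<lparr>carrier := ?S l\<rparr>" by simp
    have inv: "invariants ?K M act = {m \<in> carrier M. act x m = m}" using invS[OF hl] Cons.prems by simp
    have h1: "card (H1 ?K M act) \<le> ?c ^ Suc (length (h # l))"
    proof -
      have "card (H1 ?K M act) \<le> card (H1 (G\<lparr>carrier := ?S l\<rparr>) M act) * ?c"
        using step.H1_step[OF st] inv KA by simp
      also have "\<dots> \<le> ?c ^ Suc (length l) * ?c" using IH(1) by simp
      finally show ?thesis by (simp add: ac_simps)
    qed
    have h2: "card (H2 ?K M act) \<le> ?c ^ (Suc (length (h # l)))^2"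
    proof -
      have "card (H2 ?K M act) \<le> card (H2 (G\<lparr>carrier := ?S l\<rparr>) M act) * card (H1 ?K M act)"
        using step.H2_step[OF st] KA by simp
      also have "\<dots> \<le> ?c ^ (Suc (length l))^2 * ?c ^ Suc (length (h # l))"
        using IH(2) h1 by (rule mult_le_mono)
      also have "\<dots> = ?c ^ ((Suc (length l))^2 + Suc (Suc (length l)))" by (simp add: power_add)
      also have "\<dots> \<le> ?c ^ (Suc (length (h # l)))^2"
        by (rule power_increasing[OF _ cpos]) (simp add: power2_eq_square)
      finally show ?thesis .
    qed
    show ?case using h1 h2 by simp
  qed
qed


lemma (in group) subgroup_nat_pow: "subgroup H G \<Longrightarrow> x \<in> H \<Longrightarrow> x [^] (n::nat) \<in> H"
  by (induction n) (auto intro: subgroup.m_closed subgroup.one_closed)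

lemma (in comm_group) cyc_quot:
  assumes fin: "finite (carrier G)" and H: "subgroup H G" and cyc: "cyclic_group (G Mod H)"
  shows "\<exists>x0\<in>carrier G. \<forall>g\<in>carrier G. \<exists>k::nat. g \<otimes> inv (x0 [^] k) \<in> H"
proof -
  have nH: "H \<lhd> G" using subgroup_imp_normal[OF H] .
  interpret N: normal H G by (rule nH)
  have gQ: "group (G Mod H)" using N.factorgroup_is_group .
  obtain Xc where Xc: "Xc \<in> carrier (G Mod H)" and gen: "subgroup_generated (G Mod H) {Xc} = G Mod H"
    using cyc unfolding cyclic_group_def by blast
  have finQ: "finite (carrier (G Mod H))"
    using fin by (simp add: FactGroup_def RCOSETS_def)
  have cQ: "carrier (G Mod H) = generate (G Mod H) {Xc}"
    using arg_cong[OF gen, of carrier] Xc by (simp add: subgroup_generated_def)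
  also have "\<dots> = {Xc [^]\<^bsub>G Mod H\<^esub> k | k. k \<in> (UNIV :: nat set)}"
    using group.generate_pow_on_finite_carrier[OF gQ finQ Xc] .
  finally have cQ: "carrier (G Mod H) = {Xc [^]\<^bsub>G Mod H\<^esub> k | k. k \<in> (UNIV :: nat set)}" .
  obtain x0 where x0: "x0 \<in> carrier G" "Xc = H #> x0"
    using Xc by (auto simp: FactGroup_def RCOSETS_def)
  show ?thesis
  proof (rule bexI[OF _ x0(1)], rule ballI)
    fix g assume g: "g \<in> carrier G"
    have "H #> g \<in> carrier (G Mod H)" using g by (auto simp: FactGroup_def RCOSETS_def)
    then obtain k :: nat where k: "H #> g = Xc [^]\<^bsub>G Mod H\<^esub> k" using cQ by auto
    also have "\<dots> = H #> (x0 [^] k)" using N.FactGroup_pow[OF x0(1)] x0(2) by simp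
    finally have "g \<in> H #> (x0 [^] k)" using rcos_self[OF g H] by simp
    then have "g \<otimes> inv (x0 [^] k) \<in> H"
      using subgroup.rcos_module_imp[OF H is_group] x0(1) by simp
    then show "\<exists>k::nat. g \<otimes> inv (x0 [^] k) \<in> H" by blast
  qed
qed

lemma (in comm_group) select_gen:
  assumes fin: "finite (carrier G)" and pr: "Factorial_Ring.prime (p::nat)" and ordG: "order G = p ^ m"
    and H: "subgroup H G" and x0: "x0 \<in> carrier G"
    and P0: "\<forall>g\<in>carrier G. \<exists>k::nat. g \<otimes> inv (x0 [^] k) \<in> H"
    and gs: "set gs \<subseteq> carrier G" and gen: "generate G (set gs) = carrier G" and ne: "gs \<noteq> []"
  shows "\<exists>x\<in>set gs. \<forall>g\<in>carrier G. \<exists>k::nat. g \<otimes> inv (x [^] k) \<in> H"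
proof -
  define N where "N = (LEAST n::nat. 0 < n \<and> x0 [^] n \<in> H)"
  have op: "0 < order G" using ordG pr by (simp add: prime_gt_0_nat)
  have ex: "0 < order G \<and> x0 [^] order G \<in> H" using op pow_order_eq_1[OF x0] subgroup.one_closed[OF H] by simp
  have NP: "0 < N \<and> x0 [^] N \<in> H" unfolding N_def by (rule LeastI[of _ "order G"]) (rule ex)
  have Nmin: "\<And>n. 0 < n \<Longrightarrow> n < N \<Longrightarrow> x0 [^] n \<notin> H" unfolding N_def using not_less_Least by blast
  have mult_in: "x0 [^] (N * q) \<in> H" for q
    using subgroup_nat_pow[OF H, of "x0 [^] N" q] NP x0 by (simp add: nat_pow_pow)
  have dvdN: "N dvd n" if "x0 [^] n \<in> H" for n
  proof -
    have "x0 [^] n = x0 [^] (N * (n div N)) \<otimes> x0 [^] (n mod N)"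
      using x0 by (simp add: nat_pow_mult)
    then have "x0 [^] (n mod N) = inv (x0 [^] (N * (n div N))) \<otimes> x0 [^] n"
      using x0 by (simp add: m_assoc[symmetric])
    also have "\<dots> \<in> H" using subgroup.m_closed[OF H subgroup.m_inv_closed[OF H mult_in] that] .
    finally have "x0 [^] (n mod N) \<in> H" .
    then have "n mod N = 0" using Nmin[of "n mod N"] NP by (meson mod_less_divisor neq0_conv)
    then show ?thesis by auto
  qed
  have "N dvd p ^ m" using dvdN ex ordG by simp
  then obtain e where e: "e \<le> m" "N = p ^ e" using divides_primepow_nat[OF pr] by blast
  show ?thesis
  proof (cases e)
    case 0
    then have x0H: "x0 \<in> H" using NP e x0 by simp
    have "hd gs \<in> set gs" using ne by simp
    moreover have "\<forall>g\<in>carrier G. \<exists>k::nat. g \<otimes> inv (hd gs [^] k) \<in> H"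
    proof
      fix g assume g: "g \<in> carrier G"
      obtain k :: nat where k: "g \<otimes> inv (x0 [^] k) \<in> H" using P0 g by blast
      have "g = (g \<otimes> inv (x0 [^] k)) \<otimes> x0 [^] k" using g x0 by (simp add: m_assoc)
      also have "\<dots> \<in> H" using subgroup.m_closed[OF H k subgroup_nat_pow[OF H x0H]] .
      finally have "g \<otimes> inv (hd gs [^] (0::nat)) \<in> H" using g by simp
      then show "\<exists>k::nat. g \<otimes> inv (hd gs [^] k) \<in> H" by blast
    qed
    ultimately show ?thesis by blast
  next
    case (Suc e')
    define N' where "N' = p ^ e'"
    have NN': "N = p * N'" using e Suc by (simp add: N'_def)
    have N'pos: "0 < N'" using pr by (simp add: N'_def prime_gt_0_nat)
    have p1: "1 < p" using prime_gt_1_nat[OF pr] by simp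
    define T where "T = {g \<in> carrier G. g [^] N' \<in> H}"
    have T: "subgroup T G"
    proof (rule subgroupI)
      show "T \<subseteq> carrier G" by (auto simp: T_def)
      show "T \<noteq> {}" using subgroup.one_closed[OF H] by (auto simp: T_def)
    next
      fix a assume "a \<in> T" then show "inv a \<in> T"
        using subgroup.m_inv_closed[OF H] by (auto simp: T_def nat_pow_inv)
    next
      fix a b assume "a \<in> T" "b \<in> T" then show "a \<otimes> b \<in> T"
        using subgroup.m_closed[OF H] by (auto simp: T_def nat_pow_distrib)
    qed
    have "\<not> set gs \<subseteq> T"
    proof
      assume "set gs \<subseteq> T"
      then have "carrier G \<subseteq> T" using generate_subgroup_incl[OF _ T] gen by blast
      then have "x0 [^] N' \<in> H" using x0 by (auto simp: T_def)
      then have "p * N' dvd N'" using dvdN NN' by simp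
      then have "p * N' \<le> N'" using N'pos by (simp add: dvd_imp_le)
      then show False using p1 N'pos by (metis less_le_not_le mult_less_cancel2 nat_mult_1)
    qed
    then obtain g1 where g1: "g1 \<in> set gs" "g1 [^] N' \<notin> H" using gs by (auto simp: T_def)
    have g1c: "g1 \<in> carrier G" using g1 gs by auto
    obtain k :: nat where k: "g1 \<otimes> inv (x0 [^] k) \<in> H" using P0 g1c by blast
    define h1 where "h1 = g1 \<otimes> inv (x0 [^] k)"
    have h1: "h1 \<in> H" "h1 \<in> carrier G" using k subgroup.mem_carrier[OF H] by (auto simp: h1_def)
    have g1e: "g1 = h1 \<otimes> x0 [^] k" using g1c x0 by (simp add: h1_def m_assoc)
    have npk: "\<not> p dvd k"
    proof
      assume "p dvd k"
      then obtain k2 where k2: "k = p * k2" by blast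
      have "g1 [^] N' = h1 [^] N' \<otimes> x0 [^] (N * k2)"
        using h1 x0 by (simp add: g1e nat_pow_distrib nat_pow_pow k2 NN' ac_simps)
      also have "\<dots> \<in> H" using subgroup.m_closed[OF H subgroup_nat_pow[OF H h1(1)] mult_in] .
      finally show False using g1(2) by simp
    qed
    have cop: "coprime k N"
      using prime_imp_coprime[OF pr npk] e by (simp add: coprime_commute)
    have k0: "k \<noteq> 0" using npk dvd_0_right by metis
    obtain a b where ab: "k * a = N * b + 1" using bezout_nat[OF k0, of N] cop by auto
    have xa: "x0 [^] (k * a) = x0 [^] (N * b) \<otimes> x0" using x0 by (simp add: ab)
    have "g1 [^] a = h1 [^] a \<otimes> (x0 [^] (N * b) \<otimes> x0)"
      using h1 x0 by (simp add: g1e nat_pow_distrib nat_pow_pow xa)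
    have canc: "\<And>x y. x \<in> carrier G \<Longrightarrow> y \<in> carrier G \<Longrightarrow> x \<otimes> (inv x \<otimes> y) = y"
      by (simp add: m_assoc[symmetric])
    define h2 where "h2 = x0 \<otimes> inv (g1 [^] a)"
    have h2: "h2 \<in> H"
    proof -
      have "h2 = inv (h1 [^] a \<otimes> x0 [^] (N * b))"
        using h1 x0 \<open>g1 [^] a = _\<close> by (simp add: h2_def inv_mult m_ac canc)
      also have "\<dots> \<in> H"
        using subgroup.m_inv_closed[OF H subgroup.m_closed[OF H subgroup_nat_pow[OF H h1(1)] mult_in]] .
      finally show ?thesis .
    qed
    have h2c: "h2 \<in> carrier G" using h2 subgroup.mem_carrier[OF H] by auto
    have x0e: "x0 = h2 \<otimes> g1 [^] a" using x0 g1c by (simp add: h2_def m_assoc)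
    have "\<forall>g\<in>carrier G. \<exists>k::nat. g \<otimes> inv (g1 [^] k) \<in> H"
    proof
      fix g assume g: "g \<in> carrier G"
      obtain t :: nat where t: "g \<otimes> inv (x0 [^] t) \<in> H" using P0 g by blast
      have "g \<otimes> inv (g1 [^] (a * t)) = (g \<otimes> inv (x0 [^] t)) \<otimes> h2 [^] t"
        using g g1c h2c by (simp add: x0e nat_pow_distrib nat_pow_pow inv_mult m_ac canc)
      also have "\<dots> \<in> H" using subgroup.m_closed[OF H t subgroup_nat_pow[OF H h2]] .
      finally show "\<exists>k::nat. g \<otimes> inv (g1 [^] k) \<in> H" by blast
    qed
    then show ?thesis using g1(1) by blast
  qed
qed


theorem lemma2p4:
  fixes G :: "('g,'a) monoid_scheme" and M :: "('m,'b) monoid_scheme"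
    and act :: "'g \<Rightarrow> 'm \<Rightarrow> 'm" and p d :: nat and H0 :: "'g set"
  assumes "comm_group G" and "p_group p G"
    and "comm_group M" and "p_group p M"
    and "\<exists>gs. length gs = d \<and> set gs \<subseteq> carrier G \<and> generate G (set gs) = carrier G"
    and "module_action G M act"
    and "subgroup H0 G" and "cyclic_group (G Mod H0)"
    and "\<forall>h\<in>H0. \<forall>m\<in>carrier M. act h m = m"
  shows "card (H1 G M act) \<le> card (invariants G M act) ^ d \<and>
         card (H2 G M act) \<le> card (invariants G M act) ^ (d^2)"
proof -
  note Gc = assms(1) and pG = assms(2) and pM = assms(4) and ma = assms(6) and H0 = assms(7)
    and cyc = assms(8) and triv0 = assms(9)
  interpret G: comm_group G by (rule Gc)
  interpret gG: gmod G M act by unfold_locales (rule ma)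
  obtain gs where gs: "length gs = d" "set gs \<subseteq> carrier G" "generate G (set gs) = carrier G"
    using assms(5) by blast
  have fG: "finite (carrier G)" and pr: "Factorial_Ring.prime p" and ordG: "\<exists>k. order G = p ^ k"
    using pG by (auto simp: p_group_def)
  have fM: "finite (carrier M)" using pM by (simp add: p_group_def)
  show ?thesis
  proof (cases "d = 0")
    case True
    then have "gs = []" using gs(1) by simp
    then have cG: "carrier G = {\<one>\<^bsub>G\<^esub>}" using gs(3) G.generate_empty by simp
    show ?thesis using gG.trivial_H[OF cG fM] True by simp
  next
    case False
    then have ne: "gs \<noteq> []" using gs(1) by auto
    obtain m where om: "order G = p ^ m" using ordG by blast
    obtain x0 where x0: "x0 \<in> carrier G" "\<forall>g\<in>carrier G. \<exists>k::nat. g \<otimes>\<^bsub>G\<^esub> inv\<^bsub>G\<^esub> (x0 [^]\<^bsub>G\<^esub> k) \<in> H0"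
      using G.cyc_quot[OF fG H0 cyc] by blast
    obtain x where x: "x \<in> set gs" and Px: "\<forall>g\<in>carrier G. \<exists>k::nat. g \<otimes>\<^bsub>G\<^esub> inv\<^bsub>G\<^esub> (x [^]\<^bsub>G\<^esub> k) \<in> H0"
      using G.select_gen[OF fG pr om H0 x0(1) x0(2) gs(2) gs(3) ne] by blast
    have xc: "x \<in> carrier G" using x gs(2) by auto
    define kf where "kf g = (SOME k::nat. g \<otimes>\<^bsub>G\<^esub> inv\<^bsub>G\<^esub> (x [^]\<^bsub>G\<^esub> k) \<in> H0)" for g
    have kf: "g \<otimes>\<^bsub>G\<^esub> inv\<^bsub>G\<^esub> (x [^]\<^bsub>G\<^esub> kf g) \<in> H0" if "g \<in> carrier G" for g
      unfolding kf_def using Px that by (meson someI_ex)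
    define hs where "hs = map (\<lambda>g. g \<otimes>\<^bsub>G\<^esub> inv\<^bsub>G\<^esub> (x [^]\<^bsub>G\<^esub> kf g)) (remove1 x gs)"
    have rs: "set (remove1 x gs) \<subseteq> carrier G" using gs(2) set_remove1_subset by fastforce
    have hsH: "set hs \<subseteq> H0" unfolding hs_def using kf rs by auto
    have hsc: "set hs \<subseteq> carrier G" using hsH subgroup.subset[OF H0] by blast
    have len: "Suc (length hs) = d" unfolding hs_def using x gs(1) length_remove1[of x gs] False
      by (simp add: length_pos_if_in_set)
    have triv: "\<forall>h\<in>set hs. \<forall>m\<in>carrier M. act h m = m" using hsH triv0 by blast
    let ?S = "generate G (insert x (set hs))"
    have subS: "subgroup ?S G" by (rule G.generate_is_subgroup) (use xc hsc in auto)
    have xS: "x \<in> ?S" by (rule generate.incl) simp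
    have gsS: "set gs \<subseteq> ?S"
    proof
      fix g assume g: "g \<in> set gs"
      show "g \<in> ?S"
      proof (cases "g = x")
        case True then show ?thesis using xS by simp
      next
        case False
        then have gr: "g \<in> set (remove1 x gs)" using g by (simp add: in_set_remove1)
        have gc: "g \<in> carrier G" using g gs(2) by auto
        have "g \<otimes>\<^bsub>G\<^esub> inv\<^bsub>G\<^esub> (x [^]\<^bsub>G\<^esub> kf g) \<in> set hs" unfolding hs_def using gr by auto
        then have h: "g \<otimes>\<^bsub>G\<^esub> inv\<^bsub>G\<^esub> (x [^]\<^bsub>G\<^esub> kf g) \<in> ?S" by (intro generate.incl) simp
        have "g = (g \<otimes>\<^bsub>G\<^esub> inv\<^bsub>G\<^esub> (x [^]\<^bsub>G\<^esub> kf g)) \<otimes>\<^bsub>G\<^esub> x [^]\<^bsub>G\<^esub> kf g"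
          using gc xc by (simp add: G.m_assoc)
        also have "\<dots> \<in> ?S" using subgroup.m_closed[OF subS h G.subgroup_nat_pow[OF subS xS]] .
        finally show ?thesis .
      qed
    qed
    have Seq: "?S = carrier G"
    proof
      show "?S \<subseteq> carrier G" using subgroup.subset[OF subS] .
      show "carrier G \<subseteq> ?S" using G.generate_subgroup_incl[OF gsS subS] gs(3) by simp
    qed
    have inv: "invariants G M act = {m \<in> carrier M. act x m = m}"
    proof (intro equalityI subsetI)
      fix m assume "m \<in> invariants G M act" then show "m \<in> {m \<in> carrier M. act x m = m}"
        using xc by (auto simp: invariants_def)
    next
      fix m assume m: "m \<in> {m \<in> carrier M. act x m = m}"
      have "\<forall>g\<in>?S. act g m = m" by (rule gG.inv_gen) (use xc hsc m triv in auto)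
      then show "m \<in> invariants G M act" using m Seq by (auto simp: invariants_def)
    qed
    note ch = chain[OF Gc fG fM ma xc hsc triv]
    then show ?thesis unfolding Seq inv len by simp
  qed
qed


end
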